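(* There are at least $37$ pairwise inequivalent extremal Type~II $\mathbb{Z}_4$-codes of length $40$.
   Context: A $\mathbb{Z}_4$-code of length $n$ is a $\mathbb{Z}_4$-submodule of $\mathbb{Z}_4^n$; it is self-dual if it equals its dual with respect to $x\cdot y=\sum x_iy_i \pmod 4$. The Euclidean weight of $x$ is $n_1(x)+4n_2(x)+n_3(x)$, $n_\alpha(x)$ being the number of coordinates equal to $\alpha$. A Type~II $\mathbb{Z}_4$-code is a self-dual code all of whose codewords have Euclidean weight divisible by $8$; it is extremal if its minimum Euclidean weight equals $8\lfloor n/24\rfloor+8$. Two $\mathbb{Z}_4$-codes are equivalent if one can be obtained from the other by permuting coordinates and changing the signs of some coordinates. *)

theory Defs
  imports Main "HOL-Library.Numeral_Type"
begin

text \<open>Z4 is the numeral type 4 (integers mod 4); a vector of length n is a function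
  from a finite index type of cardinality n into Z4.\<close>

definition z4_code :: "('n::finite \<Rightarrow> 4) set \<Rightarrow> bool" where
  "z4_code C \<longleftrightarrow> (\<lambda>i. 0) \<in> C \<and>
     (\<forall>x\<in>C. \<forall>y\<in>C. (\<lambda>i. x i + y i) \<in> C) \<and>
     (\<forall>a::4. \<forall>x\<in>C. (\<lambda>i. a * x i) \<in> C)"

definition z4_inner :: "('n::finite \<Rightarrow> 4) \<Rightarrow> ('n \<Rightarrow> 4) \<Rightarrow> 4" where
  "z4_inner x y = (\<Sum>i\<in>UNIV. x i * y i)"

definition z4_dual :: "('n::finite \<Rightarrow> 4) set \<Rightarrow> ('n \<Rightarrow> 4) set" where
  "z4_dual C = {y. \<forall>x\<in>C. z4_inner x y = 0}"

definition z4_self_dual :: "('n::finite \<Rightarrow> 4) set \<Rightarrow> bool" where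
  "z4_self_dual C \<longleftrightarrow> z4_code C \<and> C = z4_dual C"

definition n_count :: "4 \<Rightarrow> ('n::finite \<Rightarrow> 4) \<Rightarrow> nat" where
  "n_count a x = card {i. x i = a}"

definition euclid_wt :: "('n::finite \<Rightarrow> 4) \<Rightarrow> nat" where
  "euclid_wt x = n_count 1 x + 4 * n_count 2 x + n_count 3 x"

definition type_II :: "('n::finite \<Rightarrow> 4) set \<Rightarrow> bool" where
  "type_II C \<longleftrightarrow> z4_self_dual C \<and> (\<forall>x\<in>C. 8 dvd euclid_wt x)"

definition min_euclid_wt :: "('n::finite \<Rightarrow> 4) set \<Rightarrow> nat" where
  "min_euclid_wt C = Min {euclid_wt x | x. x \<in> C \<and> x \<noteq> (\<lambda>i. 0)}"

definition extremal_type_II :: "('n::finite \<Rightarrow> 4) set \<Rightarrow> bool" where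
  "extremal_type_II C \<longleftrightarrow> type_II C \<and>
     min_euclid_wt C = 8 * (CARD('n) div 24) + 8"

definition z4_equiv :: "('n::finite \<Rightarrow> 4) set \<Rightarrow> ('n \<Rightarrow> 4) set \<Rightarrow> bool" where
  "z4_equiv C D \<longleftrightarrow> (\<exists>\<sigma> \<epsilon>. bij \<sigma> \<and> (\<forall>i. \<epsilon> i = (1::4) \<or> \<epsilon> i = -1) \<and>
     D = (\<lambda>x. \<lambda>i. \<epsilon> i * x (\<sigma> i)) ` C)"

end

theory Submission
  imports Defs
begin


lemma z4_cases: "(a::4) = 0 \<or> a = 1 \<or> a = 2 \<or> a = 3"
proof (cases a rule: bit0_cases)
  case (of_int z)
  then have "z = 0 \<or> z = 1 \<or> z = 2 \<or> z = 3" by auto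
  then show ?thesis using of_int by auto
qed

lemma of_nat4_0: "(of_nat n :: 4) = 0 \<longleftrightarrow> 4 dvd n"
  by (simp add: of_nat_eq_0_iff_char_dvd)

lemma of_nat4_mod: "(of_nat n :: 4) = of_nat (n mod 4)"
proof -
  have "n = 4 * (n div 4) + n mod 4" by simp
  then have "(of_nat n :: 4) = of_nat (4 * (n div 4)) + of_nat (n mod 4)"
    by (metis of_nat_add)
  moreover have "(of_nat (4 * (n div 4)) :: 4) = 0" by (simp only: of_nat4_0) simp
  ultimately show ?thesis by simp
qed

definition par :: "4 \<Rightarrow> bool" where "par a \<longleftrightarrow> a = 1 \<or> a = 3"
definition w4 :: "4 \<Rightarrow> nat" where "w4 a = (if a = 1 \<or> a = 3 then 1 else if a = 2 then 4 else 0)"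
definition rho :: "4 \<Rightarrow> nat" where "rho a = (if a = 1 then 1 else if a = 2 then 2 else if a = 3 then 3 else 0)"

lemma of_nat_rho: "of_nat (rho a) = a" using z4_cases[of a] by (auto simp: rho_def)

lemma w4_add: "int (w4 (a+b)) mod 8 = (int (w4 a) + int (w4 b) + 2 * int (rho a * rho b)) mod 8"
  using z4_cases[of a] z4_cases[of b] by (auto simp: w4_def rho_def)

lemma par_add: "par (a+b) \<longleftrightarrow> (par a \<noteq> par b)"
  using z4_cases[of a] z4_cases[of b] by (auto simp: par_def)
lemma par_mult: "par (a*b) \<longleftrightarrow> (par a \<and> par b)"
  using z4_cases[of a] z4_cases[of b] by (auto simp: par_def)
lemma par_neg: "par (-a) \<longleftrightarrow> par a"
  using z4_cases[of a] by (auto simp: par_def)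
lemma par_0[simp]: "\<not> par 0" by (simp add: par_def)
lemma two_mult: "2 * (a::4) = (if par a then 2 else 0)"
  using z4_cases[of a] by (auto simp: par_def)
lemma two_zero: "2 * (a::4) = 0 \<longleftrightarrow> a = 0 \<or> a = 2"
  using z4_cases[of a] by auto
lemma par_of_nat: "par (of_nat n) \<longleftrightarrow> odd n"
proof -
  have "n mod 4 = 0 \<or> n mod 4 = 1 \<or> n mod 4 = 2 \<or> n mod 4 = 3" by auto
  moreover have "odd n \<longleftrightarrow> odd (n mod 4)"
    by (simp add: even_iff_mod_2_eq_zero mod_mod_cancel)
  ultimately show ?thesis
    by (subst of_nat4_mod) (auto simp: par_def)
qed
lemma w4_ge_par: "par a \<Longrightarrow> 1 \<le> w4 a" by (auto simp: par_def w4_def)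
lemma w4_neg: "w4 (-a) = w4 a" using z4_cases[of a] by (auto simp: w4_def)

lemma card_sum_if: "card {l::'n::finite. P l} = (\<Sum>l\<in>UNIV. if P l then 1 else 0)"
  by (simp add: sum.If_cases)

lemma wt_sum: "euclid_wt (x :: 'n::finite \<Rightarrow> 4) = (\<Sum>l\<in>UNIV. w4 (x l))"
proof -
  have "euclid_wt x = (\<Sum>l\<in>UNIV. (if x l = 1 then 1 else 0) + 4 * (if x l = 2 then 1 else 0) + (if x l = 3 then 1 else 0))"
    by (simp add: euclid_wt_def n_count_def card_sum_if sum.distrib sum_distrib_left)
  also have "\<dots> = (\<Sum>l\<in>UNIV. w4 (x l))"
    by (rule sum.cong) (auto simp: w4_def)
  finally show ?thesis .
qed


lemma inner_add_right: "z4_inner a (\<lambda>i. x i + y i) = z4_inner a x + z4_inner a y"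
  by (simp add: z4_inner_def distrib_left sum.distrib)
lemma inner_smult_right: "z4_inner a (\<lambda>i. c * x i) = c * z4_inner a x"
  by (simp add: z4_inner_def sum_distrib_left mult.left_commute)
lemma inner_comm: "z4_inner x y = z4_inner y x"
  by (simp add: z4_inner_def mult.commute)
lemma inner_add_left: "z4_inner (\<lambda>i. x i + y i) a = z4_inner x a + z4_inner y a"
  by (simp add: z4_inner_def distrib_right sum.distrib)
lemma inner_smult_left: "z4_inner (\<lambda>i. c * x i) a = c * z4_inner x a"
  by (simp add: z4_inner_def sum_distrib_left mult.assoc)
lemma inner_sum_left: "z4_inner (\<lambda>l. \<Sum>i<k. c i * g i l) y = (\<Sum>i<k. c i * z4_inner (g i) y)"
  by (simp add: z4_inner_def sum_distrib_right sum_distrib_left mult.assoc sum.swap[of _ _ UNIV])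
lemma inner_sum_right: "z4_inner y (\<lambda>l. \<Sum>i<k. c i * g i l) = (\<Sum>i<k. c i * z4_inner y (g i))"
  using inner_sum_left[of c g k y] by (simp add: inner_comm)

lemma wt_add:
  assumes "z4_inner x y = 0"
  shows "int (euclid_wt (\<lambda>i. x i + y i)) mod 8 = (int (euclid_wt x) + int (euclid_wt y)) mod 8"
proof -
  have "(of_nat (\<Sum>l\<in>UNIV. rho (x l) * rho (y l)) :: 4) = z4_inner x y"
    by (simp add: z4_inner_def of_nat_rho)
  then have d4: "4 dvd (\<Sum>l\<in>UNIV. rho (x l) * rho (y l))" using assms of_nat4_0 by metis
  have "int (euclid_wt (\<lambda>i. x i + y i)) mod 8 = (\<Sum>l\<in>UNIV. int (w4 (x l + y l)) mod 8) mod 8"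
    by (simp add: wt_sum mod_sum_eq)
  also have "\<dots> = (\<Sum>l\<in>UNIV. (int (w4 (x l)) + int (w4 (y l)) + 2 * int (rho (x l) * rho (y l))) mod 8) mod 8"
    by (simp add: w4_add)
  also have "\<dots> = (int (euclid_wt x) + int (euclid_wt y) + 2 * int (\<Sum>l\<in>UNIV. rho (x l) * rho (y l))) mod 8"
    by (simp add: mod_sum_eq wt_sum sum.distrib sum_distrib_left)
  also have "\<dots> = (int (euclid_wt x) + int (euclid_wt y)) mod 8"
    proof -
    obtain q where q: "(\<Sum>l\<in>UNIV. rho (x l) * rho (y l)) = 4 * q" using d4 by (auto elim: dvdE)
    show ?thesis unfolding q by simp
  qed
  finally show ?thesis .
qed


lemma four_zero[simp]: "(4::4) = 0" by simp
lemma two_two: "2 * (2 * (a::4)) = 0" by (simp add: mult.assoc[symmetric])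
lemma prod_even: "(a::4) = 0 \<or> a = 2 \<Longrightarrow> b = 0 \<or> b = 2 \<Longrightarrow> a * b = 0" by auto

locale gcode =
  fixes g :: "nat \<Rightarrow> 'n::finite \<Rightarrow> 4" and p :: "nat \<Rightarrow> 'n" and k :: nat
  assumes hp: "\<And>i j. i < k \<Longrightarrow> j < k \<Longrightarrow> g i (p j) = (if i = j then 1 else 0)"
  and ho: "\<And>i j. i < k \<Longrightarrow> j < k \<Longrightarrow> z4_inner (g i) (g j) = 0"
begin

definition C :: "('n \<Rightarrow> 4) set" where
  "C = {x. (\<forall>i<k. z4_inner (g i) x = 0) \<and> (\<forall>l. 2 * (x l - (\<Sum>i<k. x (p i) * g i l)) = 0)}"

lemma CI: "(\<And>i. i < k \<Longrightarrow> z4_inner (g i) x = 0) \<Longrightarrow> (\<And>l. 2 * (x l - (\<Sum>i<k. x (p i) * g i l)) = 0) \<Longrightarrow> x \<in> C"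
  unfolding C_def mem_Collect_eq by blast
lemma Cx: "x \<in> C \<Longrightarrow> 2 * (x l - (\<Sum>i<k. x (p i) * g i l)) = 0"
  unfolding C_def mem_Collect_eq by blast
lemma Cg: "x \<in> C \<Longrightarrow> i < k \<Longrightarrow> z4_inner (g i) x = 0"
  unfolding C_def mem_Collect_eq by blast

lemma zero_in: "(\<lambda>i. 0) \<in> C"
  by (rule CI) (simp_all add: z4_inner_def)

lemma add_in: "x \<in> C \<Longrightarrow> y \<in> C \<Longrightarrow> (\<lambda>i. x i + y i) \<in> C"
proof -
  assume x: "x \<in> C" and y: "y \<in> C"
  have eq: "2 * ((x l + y l) - (\<Sum>i<k. (x (p i) + y (p i)) * g i l)) =
        2 * (x l - (\<Sum>i<k. x (p i) * g i l)) + 2 * (y l - (\<Sum>i<k. y (p i) * g i l))" for l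
    by (simp add: algebra_simps sum.distrib)
  show ?thesis
  proof (rule CI)
    fix i assume "i < k" then show "z4_inner (g i) (\<lambda>i. x i + y i) = 0"
      using Cg[OF x] Cg[OF y] by (simp add: inner_add_right)
  next
    fix l show "2 * ((x l + y l) - (\<Sum>i<k. (x (p i) + y (p i)) * g i l)) = 0"
      by (simp only: eq Cx[OF x] Cx[OF y] add_0_left)
  qed
qed

lemma smult_in: "x \<in> C \<Longrightarrow> (\<lambda>i. a * x i) \<in> C"
proof -
  assume x: "x \<in> C"
  have eq: "2 * (a * x l - (\<Sum>i<k. a * x (p i) * g i l)) = a * (2 * (x l - (\<Sum>i<k. x (p i) * g i l)))" for l
    by (simp add: algebra_simps sum_distrib_left)
  show ?thesis
  proof (rule CI)
    fix i assume "i < k" then show "z4_inner (g i) (\<lambda>i. a * x i) = 0"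
      using Cg[OF x] by (simp add: inner_smult_right)
  next
    fix l show "2 * (a * x l - (\<Sum>i<k. a * x (p i) * g i l)) = 0"
      by (simp only: eq Cx[OF x] mult_zero_right)
  qed
qed

lemma code: "z4_code C"
  unfolding z4_code_def using zero_in add_in smult_in by blast

lemma sum_delta_g: "i < k \<Longrightarrow> (\<Sum>j<k. g i (p j) * f j) = f i"
proof -
  assume i: "i < k"
  have "(\<Sum>j<k. g i (p j) * f j) = (\<Sum>j<k. if i = j then f j else 0)"
    by (rule sum.cong) (auto simp: hp i)
  then show ?thesis using i by simp
qed

lemma sum_delta_g': "j < k \<Longrightarrow> (\<Sum>i<k. g j (p i) * f i) = f j"
  by (rule sum_delta_g)

lemma g_in: "i < k \<Longrightarrow> g i \<in> C"
proof -
  assume i: "i < k"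
  have "(\<Sum>j<k. g i (p j) * g j l) = g i l" for l using sum_delta_g[OF i] .
  then show ?thesis using i ho by (intro CI) simp_all
qed

lemma sum_in: "(\<lambda>l. \<Sum>i<m. c i * g i l) \<in> C" if "m \<le> k"
  using that
proof (induction m)
  case 0 then show ?case using zero_in by simp
next
  case (Suc m)
  then have "(\<lambda>l. \<Sum>i<m. c i * g i l) \<in> C" by simp
  moreover have "(\<lambda>l. c m * g m l) \<in> C" using Suc.prems g_in smult_in by simp
  ultimately have "(\<lambda>l. (\<Sum>i<m. c i * g i l) + c m * g m l) \<in> C" by (rule add_in)
  then show ?case by simp
qed

definition sp :: "('n \<Rightarrow> 4) \<Rightarrow> 'n \<Rightarrow> 4" where
  "sp x = (\<lambda>l. \<Sum>i<k. x (p i) * g i l)"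

lemma sp_in: "sp x \<in> C" unfolding sp_def by (rule sum_in) simp

lemma diff_in: "x \<in> C \<Longrightarrow> y \<in> C \<Longrightarrow> (\<lambda>l. x l - y l) \<in> C"
proof -
  assume "x \<in> C" "y \<in> C"
  then have "(\<lambda>l. x l + (-1) * y l) \<in> C" by (intro add_in smult_in)
  then show ?thesis by simp
qed

lemma rest_even: "x \<in> C \<Longrightarrow> x l - sp x l = 0 \<or> x l - sp x l = 2"
  using Cx[of x l] unfolding sp_def two_zero by simp

lemma rest_in: "x \<in> C \<Longrightarrow> (\<lambda>l. x l - sp x l) \<in> C"
  using diff_in sp_in by blast

lemma inner_g: "x \<in> C \<Longrightarrow> i < k \<Longrightarrow> z4_inner (g i) x = 0"
  by (rule Cg)

lemma inner_sp: "y \<in> C \<Longrightarrow> z4_inner (sp x) y = 0"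
  by (simp add: sp_def inner_sum_left inner_g)

lemma self_orth: assumes x: "x \<in> C" and y: "y \<in> C" shows "z4_inner x y = 0"
proof -
  define zx where "zx = (\<lambda>l. x l - sp x l)"
  define zy where "zy = (\<lambda>l. y l - sp y l)"
  have xe: "x = (\<lambda>l. sp x l + zx l)" by (simp add: zx_def)
  have ye: "y = (\<lambda>l. sp y l + zy l)" by (simp add: zy_def)
  have zxC: "zx \<in> C" using rest_in[OF x] by (simp add: zx_def)
  have "z4_inner x y = z4_inner zx y"
    by (subst xe) (simp add: inner_add_left inner_sp[OF y])
  also have "\<dots> = z4_inner y zx" by (simp add: inner_comm)
  also have "\<dots> = z4_inner zy zx"
    by (subst ye) (simp add: inner_add_left inner_sp[OF zxC])
  also have "\<dots> = 0"
    unfolding z4_inner_def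
  proof (rule sum.neutral, rule ballI)
    fix l
    have "zx l = 0 \<or> zx l = 2" unfolding zx_def by (rule rest_even[OF x])
    moreover have "zy l = 0 \<or> zy l = 2" unfolding zy_def by (rule rest_even[OF y])
    ultimately show "zy l * zx l = 0" by (rule prod_even[rotated])
  qed
  finally show ?thesis .
qed

definition tl_vec :: "'n \<Rightarrow> 'n \<Rightarrow> 4" where
  "tl_vec l = (\<lambda>m. (if m = l then 2 else 0) + (\<Sum>i<k. if m = p i then 2 * g i l else 0))"

lemma inner_tl: "z4_inner (tl_vec l) y = 2 * (y l + (\<Sum>i<k. g i l * y (p i)))"
proof -
  have sw: "(\<Sum>m\<in>UNIV. \<Sum>i<k. if m = p i then 2 * g i l * y (p i) else 0) = (\<Sum>i<k. 2 * g i l * y (p i))"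
    by (subst sum.swap) simp
  have "z4_inner (tl_vec l) y = (\<Sum>m\<in>UNIV. (if m = l then 2 * y m else 0) + (\<Sum>i<k. if m = p i then 2 * g i l * y (p i) else 0))"
    unfolding z4_inner_def tl_vec_def
    by (rule sum.cong) (auto simp: distrib_right sum_distrib_right intro!: sum.cong)
  also have "\<dots> = 2 * y l + (\<Sum>i<k. 2 * g i l * y (p i))"
    by (simp add: sum.distrib sw)
  also have "\<dots> = 2 * (y l + (\<Sum>i<k. g i l * y (p i)))"
    by (simp add: distrib_left sum_distrib_left mult.assoc)
  finally show ?thesis .
qed

lemma tl_two: "2 * tl_vec l m = 0"
  by (simp add: tl_vec_def distrib_left sum_distrib_left if_distrib two_two cong: if_cong)

lemma tl_in: "tl_vec l \<in> C"
proof (rule CI)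
  fix j assume j: "j < k"
  have "z4_inner (g j) (tl_vec l) = z4_inner (tl_vec l) (g j)" by (simp add: inner_comm)
  also have "\<dots> = 2 * (g j l + (\<Sum>i<k. g i l * g j (p i)))" by (rule inner_tl)
  also have "(\<Sum>i<k. g i l * g j (p i)) = g j l"
    using sum_delta_g'[OF j, of "\<lambda>i. g i l"] by (simp add: mult.commute)
  finally show "z4_inner (g j) (tl_vec l) = 0" by (simp add: mult_2[symmetric] two_two)
next
  fix m
  have "2 * (tl_vec l m - (\<Sum>i<k. tl_vec l (p i) * g i m)) = 2 * tl_vec l m - (\<Sum>i<k. (2 * tl_vec l (p i)) * g i m)"
    by (simp add: right_diff_distrib sum_distrib_left mult.assoc)
  then show "2 * (tl_vec l m - (\<Sum>i<k. tl_vec l (p i) * g i m)) = 0" by (simp only: tl_two) simp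
qed

lemma dual: "C = z4_dual C"
proof
  show "C \<subseteq> z4_dual C" using self_orth by (auto simp: z4_dual_def)
next
  show "z4_dual C \<subseteq> C"
  proof
    fix y assume "y \<in> z4_dual C"
    then have yd: "\<And>x. x \<in> C \<Longrightarrow> z4_inner x y = 0" by (simp add: z4_dual_def)
    have a: "\<forall>i<k. z4_inner (g i) y = 0" using yd g_in by blast
    have "2 * (y l - (\<Sum>i<k. y (p i) * g i l)) = 0" for l
    proof -
      have "2 * (y l + (\<Sum>i<k. g i l * y (p i))) = 0" using yd[OF tl_in] inner_tl by simp
      moreover have "2 * (y l - (\<Sum>i<k. y (p i) * g i l)) = 2 * (y l + (\<Sum>i<k. g i l * y (p i))) - 2 * (2 * (\<Sum>i<k. g i l * y (p i)))"
        by (simp add: algebra_simps)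
      ultimately show ?thesis by (simp add: two_two)
    qed
    then show "y \<in> C" using a by (intro CI) simp_all
  qed
qed

lemma even_in:
  assumes "\<And>l. 2 * x l = 0" and "\<And>i. i < k \<Longrightarrow> z4_inner (g i) x = 0"
  shows "x \<in> C"
proof (rule CI)
  fix i assume "i < k" then show "z4_inner (g i) x = 0" by (rule assms(2))
next
  fix l
  have "2 * (x l - (\<Sum>i<k. x (p i) * g i l)) = 2 * x l - (\<Sum>i<k. (2 * x (p i)) * g i l)"
    by (simp add: right_diff_distrib sum_distrib_left mult.assoc)
  then show "2 * (x l - (\<Sum>i<k. x (p i) * g i l)) = 0" by (simp only: assms(1)) simp
qed

end


lemma wt_zero: "euclid_wt (\<lambda>l::'n::finite. (0::4)) = 0"
  by (simp add: wt_sum w4_def)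

lemma w4_three: "w4 (3 * a) = w4 a"
  using z4_cases[of a] by (auto simp: w4_def)

lemma wt_smult:
  assumes io: "z4_inner y y = 0" and w: "int (euclid_wt y) mod 8 = 0"
  shows "int (euclid_wt (\<lambda>l. c * y l)) mod 8 = 0"
proof -
  have "c = 0 \<or> c = 1 \<or> c = 2 \<or> c = 3" by (rule z4_cases)
  moreover
  { assume "c = 0" then have ?thesis by (simp add: wt_zero) }
  moreover
  { assume "c = 1" then have ?thesis using w by simp }
  moreover
  { assume c3: "c = 3"
    have "euclid_wt (\<lambda>l. 3 * y l) = euclid_wt y" by (simp add: wt_sum w4_three)
    then have ?thesis using w c3 by simp }
  moreover
  { assume c2: "c = 2"
    have e: "(\<lambda>l. c * y l) = (\<lambda>l. y l + y l)" unfolding c2 by (rule ext) (rule mult_2)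
    have "int (euclid_wt (\<lambda>l. y l + y l)) mod 8 = (int (euclid_wt y) + int (euclid_wt y)) mod 8"
      by (rule wt_add[OF io])
    also have "\<dots> = 0" using w by presburger
    finally have ?thesis unfolding e . }
  ultimately show ?thesis by blast
qed

lemma card_two_sum: "(\<Sum>l\<in>UNIV. if P l then (2::4) else 0) = of_nat (2 * card {l::'n::finite. P l})"
proof -
  have "(\<Sum>l\<in>UNIV. if P l then (2::4) else 0) = (\<Sum>l\<in>{l. P l}. 2)"
    by (simp add: sum.If_cases)
  also have "\<dots> = of_nat (2 * card {l::'n::finite. P l})" by (simp add: mult.commute)
  finally show ?thesis .
qed

lemma wt_evenvec: "(\<And>l. x l = 0 \<or> x l = 2) \<Longrightarrow> euclid_wt (x::'n::finite \<Rightarrow> 4) = 4 * card {l. x l = 2}"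
proof -
  assume h: "\<And>l. x l = 0 \<or> x l = 2"
  have "w4 (x l) = 4 * (if x l = 2 then 1 else 0)" for l using h[of l] by (auto simp: w4_def)
  then have "euclid_wt x = (\<Sum>l\<in>UNIV. 4 * (if x l = 2 then 1 else 0))"
    unfolding wt_sum by simp
  then show ?thesis by (simp add: card_sum_if sum_distrib_left)
qed

lemma par_even_add: "d = 0 \<or> d = 2 \<Longrightarrow> par (a + d) = par a"
  using z4_cases[of a] by (auto simp: par_def)

lemma par_sum_cong:
  fixes m :: nat and f f' :: "nat \<Rightarrow> 4"
  shows "(\<And>i. i < m \<Longrightarrow> par (f i) = par (f' i)) \<Longrightarrow> par (\<Sum>i<m. f i) = par (\<Sum>i<m. f' i)"
  by (induction m) (simp_all add: par_add)

locale xcode = gcode g p k for g :: "nat \<Rightarrow> 'n::finite \<Rightarrow> 4" and p k +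
  assumes hw: "\<And>i. i < k \<Longrightarrow> int (euclid_wt (g i)) mod 8 = 0"
  and hones: "\<forall>l. par (\<Sum>i<k. g i l)"
  and hmin: "\<And>b. (\<exists>l. par (\<Sum>i<k. if b i then g i l else 0)) \<Longrightarrow> 16 \<le> card {l. par (\<Sum>i<k. if b i then g i l else 0)}"
  and hcol: "\<And>l l'. l \<noteq> l' \<Longrightarrow> \<exists>i<k. par (g i l) \<noteq> par (g i l')"
  and hwit: "\<exists>w\<in>C. euclid_wt w = 16"
begin

lemma wt_span: "m \<le> k \<Longrightarrow> int (euclid_wt (\<lambda>l. \<Sum>i<m. c i * g i l)) mod 8 = 0"
proof (induction m)
  case 0 then show ?case by (simp add: wt_zero)
next
  case (Suc m)
  have A: "(\<lambda>l. \<Sum>i<m. c i * g i l) \<in> C" using Suc.prems by (intro sum_in) simp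
  have B: "(\<lambda>l. c m * g m l) \<in> C" using Suc.prems by (intro smult_in g_in) simp
  have "int (euclid_wt (\<lambda>l. (\<Sum>i<m. c i * g i l) + c m * g m l)) mod 8
       = (int (euclid_wt (\<lambda>l. \<Sum>i<m. c i * g i l)) + int (euclid_wt (\<lambda>l. c m * g m l))) mod 8"
    by (rule wt_add[OF self_orth[OF A B]])
  also have "\<dots> = 0"
  proof -
    have "int (euclid_wt (\<lambda>l. \<Sum>i<m. c i * g i l)) mod 8 = 0" using Suc by simp
    moreover have "int (euclid_wt (\<lambda>l. c m * g m l)) mod 8 = 0"
      using Suc.prems ho hw by (intro wt_smult) simp_all
    ultimately show ?thesis by presburger
  qed
  finally show ?case by simp
qed

lemma ones_in: "(\<lambda>l. \<Sum>i<k. g i l) \<in> C"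
  using sum_in[of k "\<lambda>i. 1"] by simp

lemma wt_even:
  assumes x: "x \<in> C" and h: "\<And>l. x l = 0 \<or> x l = 2"
  shows "even (card {l. x l = 2})"
proof -
  have "0 = z4_inner (\<lambda>l. \<Sum>i<k. g i l) x" using self_orth[OF ones_in x] by simp
  also have "\<dots> = (\<Sum>l\<in>UNIV. if x l = 2 then 2 else 0)"
    unfolding z4_inner_def
  proof (rule sum.cong)
    fix l
    have "par (\<Sum>i<k. g i l)" using hones by blast
    then show "(\<Sum>i<k. g i l) * x l = (if x l = 2 then 2 else 0)"
      using h[of l] two_mult[of "\<Sum>i<k. g i l"] by (auto simp: mult.commute)
  qed simp
  also have "\<dots> = of_nat (2 * card {l. x l = 2})" by (rule card_two_sum)
  finally have "4 dvd 2 * card {l. x l = 2}" using of_nat4_0 by metis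
  then show ?thesis by presburger
qed

lemma typeII: "x \<in> C \<Longrightarrow> 8 dvd euclid_wt x"
proof -
  assume x: "x \<in> C"
  define z where "z = (\<lambda>l. x l - sp x l)"
  have zC: "z \<in> C" unfolding z_def by (rule rest_in[OF x])
  have ze: "z l = 0 \<or> z l = 2" for l unfolding z_def by (rule rest_even[OF x])
  have xe: "x = (\<lambda>l. sp x l + z l)" by (simp add: z_def)
  have "int (euclid_wt x) mod 8 = (int (euclid_wt (sp x)) + int (euclid_wt z)) mod 8"
    by (subst xe, rule wt_add[OF self_orth[OF sp_in zC]])
  also have "int (euclid_wt (sp x)) mod 8 = 0"
    unfolding sp_def by (rule wt_span) simp
  moreover have "int (euclid_wt z) mod 8 = 0"
  proof -
    have "even (card {l. z l = 2})" by (rule wt_even[OF zC ze])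
    then obtain q where "card {l. z l = 2} = 2 * q" by (auto elim: evenE)
    then show ?thesis using wt_evenvec[of z, OF ze] by simp
  qed
  ultimately have "int (euclid_wt x) mod 8 = 0" by presburger
  then have "int 8 dvd int (euclid_wt x)" by (simp add: dvd_eq_mod_eq_0)
  then show ?thesis by (simp only: of_nat_dvd_iff)
qed

lemma res_x: "x \<in> C \<Longrightarrow> par (x l) = par (\<Sum>i<k. if par (x (p i)) then g i l else 0)"
proof -
  assume x: "x \<in> C"
  have "x l = sp x l + (x l - sp x l)" by simp
  then have "par (x l) = par (sp x l + (x l - sp x l))" by simp
  also have "\<dots> = par (sp x l)" using rest_even[OF x, of l] par_even_add by blast
  finally have "par (x l) = par (sp x l)" .
  also have "\<dots> = par (\<Sum>i<k. if par (x (p i)) then g i l else 0)"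
    unfolding sp_def by (rule par_sum_cong) (simp add: par_mult)
  finally show ?thesis .
qed

lemma card_par_le: "card {l. par (x l)} \<le> euclid_wt x"
proof -
  have "card {l. par (x l)} = (\<Sum>l\<in>UNIV. if par (x l) then 1 else 0)" by (rule card_sum_if)
  also have "\<dots> \<le> (\<Sum>l\<in>UNIV. w4 (x l))" by (rule sum_mono) (auto simp: w4_def par_def)
  finally show ?thesis by (simp add: wt_sum)
qed

lemma min_lb:
  assumes x: "x \<in> C" and nz: "x \<noteq> (\<lambda>i. 0)"
  shows "16 \<le> euclid_wt x"
proof (cases "\<exists>l. par (x l)")
  case True
  define b where "b = (\<lambda>i. par (x (p i)))"
  have r: "par (x l) = par (\<Sum>i<k. if b i then g i l else 0)" for l
    unfolding b_def by (rule res_x[OF x])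
  have "16 \<le> card {l. par (\<Sum>i<k. if b i then g i l else 0)}"
    using True r by (intro hmin) blast
  also have "\<dots> = card {l. par (x l)}" using r by simp
  also have "\<dots> \<le> euclid_wt x" by (rule card_par_le)
  finally show ?thesis .
next
  case False
  have ev: "x l = 0 \<or> x l = 2" for l
    using False z4_cases[of "x l"] by (auto simp: par_def)
  define N where "N = card {l. x l = 2}"
  have wt: "euclid_wt x = 4 * N" unfolding N_def by (rule wt_evenvec) (rule ev)
  have evN: "even N" unfolding N_def by (rule wt_even[OF x ev])
  have N0: "N \<noteq> 0"
  proof
    assume "N = 0"
    then have "{l. x l = 2} = {}" unfolding N_def by simp
    then have "x = (\<lambda>i. 0)" using ev by fastforce
    then show False using nz by simp
  qed
  have N2: "N \<noteq> 2"
  proof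
    assume "N = 2"
    then obtain a c where ac: "{l. x l = 2} = {a, c}" "a \<noteq> c" unfolding N_def by (auto simp: card_2_iff)
    obtain i where i: "i < k" "par (g i a) \<noteq> par (g i c)" using hcol[OF ac(2)] by blast
    have "0 = z4_inner (g i) x" using Cg[OF x i(1)] by simp
    also have "\<dots> = (\<Sum>l\<in>UNIV. if x l = 2 then 2 * g i l else 0)"
    proof -
      have "g i l * x l = (if x l = 2 then 2 * g i l else 0)" for l using ev[of l] by (auto simp: mult.commute)
      then show ?thesis unfolding z4_inner_def by simp
    qed
    also have "\<dots> = (\<Sum>l\<in>{l. x l = 2}. 2 * g i l)" by (simp add: sum.If_cases)
    also have "\<dots> = 2 * (g i a + g i c)" using ac by (simp add: distrib_left)
    finally have "2 * (g i a + g i c) = 0" by simp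
    then have "\<not> par (g i a + g i c)"
      using two_mult[of "g i a + g i c"] by (cases "par (g i a + g i c)") simp_all
    then show False using i(2) by (simp add: par_add)
  qed
  have "4 \<le> N" using evN N0 N2 by presburger
  then show ?thesis using wt by simp
qed

theorem extremal:
  assumes "CARD('n) = 40"
  shows "extremal_type_II C"
proof -
  let ?E = "{euclid_wt x | x. x \<in> C \<and> x \<noteq> (\<lambda>i. 0)}"
  obtain w where w: "w \<in> C" "euclid_wt w = 16" using hwit by blast
  have "euclid_wt (\<lambda>i::'n. 0::4) = 0" by (rule wt_zero)
  then have wnz: "w \<noteq> (\<lambda>i. 0)" using w(2) by auto
  have "Min ?E = 16"
  proof (rule Min_eqI)
    show "finite ?E" by simp
    show "\<And>y. y \<in> ?E \<Longrightarrow> 16 \<le> y" using min_lb by blast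
    show "16 \<in> ?E" using w wnz by force
  qed
  then have "min_euclid_wt C = 8 * (CARD('n) div 24) + 8"
    using assms by (simp add: min_euclid_wt_def)
  moreover have "type_II C"
    unfolding type_II_def z4_self_dual_def using code dual typeII by blast
  ultimately show ?thesis by (simp add: extremal_type_II_def)
qed

lemma res_C: "(\<lambda>x l. par (x l)) ` C = {(\<lambda>l. par (\<Sum>i<k. if b i then g i l else 0)) | b. True}"
proof
  show "(\<lambda>x l. par (x l)) ` C \<subseteq> {(\<lambda>l. par (\<Sum>i<k. if b i then g i l else 0)) | b. True}"
  proof (rule image_subsetI)
    fix x assume x: "x \<in> C"
    have "(\<lambda>l. par (x l)) = (\<lambda>l. par (\<Sum>i<k. if par (x (p i)) then g i l else 0))"
      by (rule ext) (rule res_x[OF x])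
    then show "(\<lambda>l. par (x l)) \<in> {(\<lambda>l. par (\<Sum>i<k. if b i then g i l else 0)) | b. True}"
      by (intro CollectI exI[where x="\<lambda>i. par (x (p i))"]) simp
  qed
next
  show "{(\<lambda>l. par (\<Sum>i<k. if b i then g i l else 0)) | b. True} \<subseteq> (\<lambda>x l. par (x l)) ` C"
  proof clarify
    fix b :: "nat \<Rightarrow> bool"
    define y where "y = (\<lambda>l. \<Sum>i<k. (if b i then 1 else 0) * g i l)"
    have yC: "y \<in> C" unfolding y_def by (rule sum_in) simp
    have ye: "y l = (\<Sum>i<k. if b i then g i l else 0)" for l
      unfolding y_def by (rule sum.cong) simp_all
    show "(\<lambda>l. par (\<Sum>i<k. if b i then g i l else 0)) \<in> (\<lambda>x l. par (x l)) ` C"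
      by (rule image_eqI[where x=y]) (simp_all add: ye yC)
  qed
qed

end

definition res :: "('n::finite \<Rightarrow> 4) set \<Rightarrow> ('n \<Rightarrow> bool) set" where
  "res C = (\<lambda>x l. par (x l)) ` C"

definition bw :: "('n::finite \<Rightarrow> bool) \<Rightarrow> nat" where "bw r = card {l. r l}"
definition bd :: "('n::finite \<Rightarrow> bool) \<Rightarrow> ('n \<Rightarrow> bool) \<Rightarrow> nat" where "bd r s = card {l. r l \<noteq> s l}"

definition inv16 :: "('n::finite \<Rightarrow> bool) set \<Rightarrow> nat" where
  "inv16 R = card {r \<in> R. bw r = 16 \<and> card {s \<in> R. bw s = 16 \<and> bd r s = 16} = 14}"

lemma card_bij_pred: "bij (\<sigma>::'n \<Rightarrow> 'n) \<Longrightarrow> card {l. P (\<sigma> l)} = card {l. P l}"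
proof -
  assume b: "bij \<sigma>"
  have "\<sigma> ` {l. P (\<sigma> l)} = {l. P l}" using b by (auto simp: bij_def surj_def)
  moreover have "inj_on \<sigma> {l. P (\<sigma> l)}" using b by (simp add: bij_def inj_on_def inj_def)
  ultimately show ?thesis by (metis card_image)
qed

lemma image_filter: "{s \<in> f ` R. P s} = f ` {s \<in> R. P (f s)}" by auto

lemma inv16_perm:
  fixes \<sigma> :: "'n::finite \<Rightarrow> 'n"
  assumes b: "bij \<sigma>"
  shows "inv16 ((\<lambda>r. r \<circ> \<sigma>) ` R) = inv16 R"
proof -
  let ?f = "\<lambda>r::'n \<Rightarrow> bool. r \<circ> \<sigma>"
  have inj: "inj ?f"
  proof (rule injI)
    fix r s :: "'n \<Rightarrow> bool" assume "r \<circ> \<sigma> = s \<circ> \<sigma>"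
    then show "r = s" using b by (metis bij_is_surj comp_apply ext surj_f_inv_f)
  qed
  have c1: "bw (r \<circ> \<sigma>) = bw r" for r
    using card_bij_pred[OF b, of r] by (simp add: bw_def)
  have c2: "bd (r \<circ> \<sigma>) (s \<circ> \<sigma>) = bd r s" for r s
    using card_bij_pred[OF b, of "\<lambda>l. r l \<noteq> s l"] by (simp add: bd_def)
  have cimg: "card (?f ` X) = card X" for X
    by (rule card_image) (rule inj_on_subset[OF inj], simp)
  have inner: "card {s \<in> ?f ` R. bw s = 16 \<and> bd (?f r) s = 16} = card {s \<in> R. bw s = 16 \<and> bd r s = 16}" for r
  proof -
    have "{s \<in> ?f ` R. bw s = 16 \<and> bd (?f r) s = 16} = ?f ` {s \<in> R. bw s = 16 \<and> bd r s = 16}"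
      unfolding image_filter c1 c2 ..
    then show ?thesis by (metis (no_types, lifting) card_image inj inj_on_subset top_greatest)
  qed
  have "{r \<in> ?f ` R. bw r = 16 \<and> card {s \<in> ?f ` R. bw s = 16 \<and> bd r s = 16} = 14}
      = ?f ` {r \<in> R. bw r = 16 \<and> card {s \<in> R. bw s = 16 \<and> bd r s = 16} = 14}"
    by (simp only: image_filter c1 c2 cimg)
  then show ?thesis unfolding inv16_def
    by (metis (no_types, lifting) card_image inj inj_on_subset top_greatest)
qed

lemma res_equiv:
  assumes "z4_equiv C D"
  shows "inv16 (res D) = inv16 (res C)"
proof -
  obtain \<sigma> \<epsilon> where b: "bij \<sigma>" and e: "\<forall>i. \<epsilon> i = (1::4) \<or> \<epsilon> i = -1"
    and D: "D = (\<lambda>x. \<lambda>i. \<epsilon> i * x (\<sigma> i)) ` C"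
    using assms unfolding z4_equiv_def by blast
  have p1: "par (1::4)" by (simp add: par_def)
  have pm1: "par (-1::4)" using par_neg[of 1] p1 by simp
  have pe: "par (\<epsilon> i * a) = par a" for i a
    using e[rule_format, of i] p1 pm1 by (auto simp: par_mult)
  have "res D = (\<lambda>x l. par (\<epsilon> l * x (\<sigma> l))) ` C" unfolding res_def D by (simp add: image_image)
  also have "\<dots> = (\<lambda>r. r \<circ> \<sigma>) ` res C" unfolding res_def by (simp add: image_image pe comp_def)
  finally show ?thesis using inv16_perm[OF b] by simp
qed




definition ix :: "40 \<Rightarrow> nat" where "ix l = nat (Rep_bit0 l)"

lemma Rep40: "0 \<le> Rep_bit0 (l::40) \<and> Rep_bit0 l < 40"
  using Rep_bit0[of l] by simp

lemma ix_lt: "ix l < 40"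
  using Rep40[of l] by (simp add: ix_def nat_less_iff)

lemma ix_of_nat: "t < 40 \<Longrightarrow> ix (of_nat t :: 40) = t"
  by (simp add: ix_def bit0.of_nat_eq bit0.Abs_inverse)

lemma ix_inj: "ix l = ix l' \<Longrightarrow> l = l'"
  using Rep40[of l] Rep40[of l'] by (simp add: ix_def bit0.Rep_inject_sym eq_nat_nat_iff)

lemma ix_bij: "bij_betw ix (UNIV::40 set) {..<40}"
proof (rule bij_betwI')
  show "\<And>x y. x \<in> UNIV \<Longrightarrow> y \<in> UNIV \<Longrightarrow> (ix x = ix y) = (x = y)" using ix_inj by blast
  show "\<And>x. x \<in> UNIV \<Longrightarrow> ix x \<in> {..<40}" using ix_lt by simp
  show "\<And>y. y \<in> {..<40} \<Longrightarrow> \<exists>x\<in>UNIV. y = ix x" using ix_of_nat by (metis UNIV_I lessThan_iff)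
qed

lemma sum_ix: "(\<Sum>l\<in>UNIV. f (ix l)) = (\<Sum>t<40. f t)"
  by (rule sum.reindex_bij_betw[OF ix_bij])

lemma card_ix: "card {l. P (ix l)} = card {t. t < 40 \<and> P t}"
proof -
  have "ix ` {l. P (ix l)} = {t. t < 40 \<and> P t}"
    using ix_lt ix_of_nat by (auto simp: image_iff) (metis)
  moreover have "inj_on ix {l. P (ix l)}" using ix_inj by (auto intro: inj_onI)
  ultimately show ?thesis by (metis card_image)
qed


fun xorl :: "bool list \<Rightarrow> bool list \<Rightarrow> bool list" where
  "xorl (x#xs) (y#ys) = (x \<noteq> y) # xorl xs ys"
| "xorl _ _ = []"

fun words :: "bool list list \<Rightarrow> bool list list" where
  "words [] = [replicate 40 False]"
| "words (r#rs) = (let ws = words rs in ws @ map (xorl r) ws)"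

fun cnt :: "bool list \<Rightarrow> nat" where
  "cnt [] = 0"
| "cnt (x#xs) = (if x then Suc (cnt xs) else cnt xs)"

fun hdist :: "bool list \<Rightarrow> bool list \<Rightarrow> nat" where
  "hdist (x#xs) (y#ys) = (if x = y then hdist xs ys else Suc (hdist xs ys))"
| "hdist _ _ = 0"

fun xw :: "bool list list \<Rightarrow> (nat \<Rightarrow> bool) \<Rightarrow> nat \<Rightarrow> bool" where
  "xw [] b t = False"
| "xw (r#rs) b t = ((b 0 \<and> r ! t) \<noteq> xw rs (\<lambda>i. b (Suc i)) t)"

definition mw :: "bool list list \<Rightarrow> (nat \<Rightarrow> bool) \<Rightarrow> bool list" where
  "mw rs b = map (xw rs b) [0..<40]"

lemma xorl_map2: "xorl xs ys = map2 (\<noteq>) xs ys"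
  by (induction xs ys rule: xorl.induct) auto

lemma cnt_eq: "cnt L = length (filter id L)"
  by (induction L) auto

lemma hdist_eq: "hdist L L' = length (filter id (map2 (\<noteq>) L L'))"
  by (induction L L' rule: hdist.induct) auto

lemma words_char:
  assumes "\<forall>r\<in>set rs. length r = 40"
  shows "set (words rs) = range (mw rs)"
  using assms
proof (induction rs)
  case Nil
  have "mw [] b = replicate 40 False" for b
    unfolding mw_def by (rule nth_equalityI) simp_all
  then show ?case by auto
next
  case (Cons r rs)
  then have IH: "set (words rs) = range (mw rs)" and lr: "length r = 40" by auto
  have x1: "xorl r (mw rs b) = mw (r#rs) (\<lambda>i. case i of 0 \<Rightarrow> True | Suc j \<Rightarrow> b j)" for b
    unfolding xorl_map2 mw_def by (rule nth_equalityI) (auto simp: lr)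
  have x0: "mw rs b = mw (r#rs) (\<lambda>i. case i of 0 \<Rightarrow> False | Suc j \<Rightarrow> b j)" for b
    unfolding mw_def by (rule nth_equalityI) auto
  have x2: "mw (r#rs) b = (if b 0 then xorl r (mw rs (\<lambda>i. b (Suc i))) else mw rs (\<lambda>i. b (Suc i)))" for b
    unfolding xorl_map2 mw_def by (rule nth_equalityI) (auto simp: lr)
  show ?case
  proof
    show "set (words (r # rs)) \<subseteq> range (mw (r # rs))"
      using IH x0 x1 by (auto simp: Let_def)
    show "range (mw (r # rs)) \<subseteq> set (words (r # rs))"
    proof
      fix w assume "w \<in> range (mw (r # rs))"
      then obtain b where "w = mw (r#rs) b" by blast
      then show "w \<in> set (words (r # rs))" using IH x2[of b] by (auto simp: Let_def)
    qed
  qed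
qed


definition vl :: "nat list \<Rightarrow> 40 \<Rightarrow> 4" where "vl L l = of_nat (L ! ix l)"
definition gv :: "nat list list \<Rightarrow> nat \<Rightarrow> 40 \<Rightarrow> 4" where "gv G i = vl (G ! i)"
definition pv :: "nat \<Rightarrow> 40" where "pv j = of_nat j"
definition conv :: "bool list \<Rightarrow> 40 \<Rightarrow> bool" where "conv L l = L ! ix l"

lemma gv_app: "gv G i l = of_nat (G ! i ! ix l)" by (simp add: gv_def vl_def)

definition wn :: "nat \<Rightarrow> nat" where
  "wn n = (if n mod 4 = 1 \<or> n mod 4 = 3 then 1 else if n mod 4 = 2 then 4 else 0)"

lemma w4_of_nat: "w4 (of_nat n) = wn n"
proof -
  have "n mod 4 = 0 \<or> n mod 4 = 1 \<or> n mod 4 = 2 \<or> n mod 4 = 3" by auto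
  then show ?thesis by (subst of_nat4_mod) (auto simp: w4_def wn_def)
qed

lemma sum_list_map2: "length r = 40 \<Longrightarrow> length r' = 40 \<Longrightarrow> sum_list (map2 f r r') = (\<Sum>t<40. f (r!t) (r'!t))"
  by (simp add: sum_list_sum_nth atLeast0LessThan)

lemma sum_list_map: "length r = 40 \<Longrightarrow> sum_list (map f r) = (\<Sum>t<40. f (r!t))"
  by (simp add: sum_list_sum_nth atLeast0LessThan)

lemma inner_vl: "length L = 40 \<Longrightarrow> length L' = 40 \<Longrightarrow> z4_inner (vl L) (vl L') = of_nat (sum_list (map2 (*) L L'))"
proof -
  assume l: "length L = 40" "length L' = 40"
  have "z4_inner (vl L) (vl L') = (\<Sum>t<40. (of_nat (L!t) :: 4) * of_nat (L'!t))"
    unfolding z4_inner_def vl_def using sum_ix[of "\<lambda>t. (of_nat (L!t) :: 4) * of_nat (L'!t)"] by simp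
  then show ?thesis using l by (simp add: sum_list_map2 of_nat_sum)
qed

lemma wt_vl: "length L = 40 \<Longrightarrow> euclid_wt (vl L) = sum_list (map wn L)"
  by (simp add: wt_sum vl_def w4_of_nat sum_list_map sum_ix[of "\<lambda>t. wn (L ! t)"])

lemma par_xw:
  assumes "\<forall>r\<in>set G. length r = 40" and "t < 40"
  shows "par (\<Sum>i<length G. if b i then (of_nat (G!i!t) :: 4) else 0) = xw (map (map odd) G) b t"
  using assms(1)
proof (induction G arbitrary: b)
  case Nil then show ?case by simp
next
  case (Cons r G)
  have lr: "length r = 40" using Cons.prems by simp
  have "(\<Sum>i<length (r#G). if b i then (of_nat ((r#G)!i!t) :: 4) else 0)
      = (if b 0 then of_nat (r!t) else 0) + (\<Sum>i<length G. if b (Suc i) then (of_nat (G!i!t) :: 4) else 0)"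
    unfolding length_Cons sum.lessThan_Suc_shift nth_Cons_Suc by simp
  then show ?case using Cons lr assms(2) by (simp add: par_add par_of_nat)
qed

fun degc :: "bool list \<Rightarrow> bool list list \<Rightarrow> nat" where
  "degc L [] = 0"
| "degc L (v#vs) = (if hdist L v = 16 then Suc (degc L vs) else degc L vs)"

fun cnt14 :: "bool list list \<Rightarrow> bool list list \<Rightarrow> nat" where
  "cnt14 [] W = 0"
| "cnt14 (L#Ls) W = (if degc L W = 14 then Suc (cnt14 Ls W) else cnt14 Ls W)"

fun cinv :: "bool list list \<Rightarrow> nat" where
  "cinv W16 = cnt14 W16 W16"

definition comp_inv :: "bool list list \<Rightarrow> nat" where
  "comp_inv W = cinv (remdups (filter (\<lambda>L. cnt L = 16) W))"

lemma degc_eq: "degc L W = length (filter (\<lambda>v. hdist L v = 16) W)"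
  by (induction W) auto

lemma cnt14_eq: "cnt14 Ls W = length (filter (\<lambda>L. degc L W = 14) Ls)"
  by (induction Ls) auto

fun pr2 :: "bool list \<Rightarrow> (bool \<times> bool) list" where
  "pr2 (a#b#xs) = (a,b) # pr2 xs"
| "pr2 _ = []"

fun xor2 :: "(bool \<times> bool) list \<Rightarrow> (bool \<times> bool) list \<Rightarrow> (bool \<times> bool) list" where
  "xor2 ((True,True)#xs) ((True,True)#ys) = (False,False) # xor2 xs ys"
| "xor2 ((True,True)#xs) ((True,False)#ys) = (False,True) # xor2 xs ys"
| "xor2 ((True,True)#xs) ((False,True)#ys) = (True,False) # xor2 xs ys"
| "xor2 ((True,True)#xs) ((False,False)#ys) = (True,True) # xor2 xs ys"
| "xor2 ((True,False)#xs) ((True,True)#ys) = (False,True) # xor2 xs ys"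
| "xor2 ((True,False)#xs) ((True,False)#ys) = (False,False) # xor2 xs ys"
| "xor2 ((True,False)#xs) ((False,True)#ys) = (True,True) # xor2 xs ys"
| "xor2 ((True,False)#xs) ((False,False)#ys) = (True,False) # xor2 xs ys"
| "xor2 ((False,True)#xs) ((True,True)#ys) = (True,False) # xor2 xs ys"
| "xor2 ((False,True)#xs) ((True,False)#ys) = (True,True) # xor2 xs ys"
| "xor2 ((False,True)#xs) ((False,True)#ys) = (False,False) # xor2 xs ys"
| "xor2 ((False,True)#xs) ((False,False)#ys) = (False,True) # xor2 xs ys"
| "xor2 ((False,False)#xs) ((True,True)#ys) = (True,True) # xor2 xs ys"
| "xor2 ((False,False)#xs) ((True,False)#ys) = (True,False) # xor2 xs ys"
| "xor2 ((False,False)#xs) ((False,True)#ys) = (False,True) # xor2 xs ys"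
| "xor2 ((False,False)#xs) ((False,False)#ys) = (False,False) # xor2 xs ys"
| "xor2 _ _ = []"

fun hd2 :: "(bool \<times> bool) list \<Rightarrow> (bool \<times> bool) list \<Rightarrow> nat" where
  "hd2 ((True,True)#xs) ((True,True)#ys) = hd2 xs ys"
| "hd2 ((True,True)#xs) ((True,False)#ys) = Suc (hd2 xs ys)"
| "hd2 ((True,True)#xs) ((False,True)#ys) = Suc (hd2 xs ys)"
| "hd2 ((True,True)#xs) ((False,False)#ys) = Suc (Suc (hd2 xs ys))"
| "hd2 ((True,False)#xs) ((True,True)#ys) = Suc (hd2 xs ys)"
| "hd2 ((True,False)#xs) ((True,False)#ys) = hd2 xs ys"
| "hd2 ((True,False)#xs) ((False,True)#ys) = Suc (Suc (hd2 xs ys))"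
| "hd2 ((True,False)#xs) ((False,False)#ys) = Suc (hd2 xs ys)"
| "hd2 ((False,True)#xs) ((True,True)#ys) = Suc (hd2 xs ys)"
| "hd2 ((False,True)#xs) ((True,False)#ys) = Suc (Suc (hd2 xs ys))"
| "hd2 ((False,True)#xs) ((False,True)#ys) = hd2 xs ys"
| "hd2 ((False,True)#xs) ((False,False)#ys) = Suc (hd2 xs ys)"
| "hd2 ((False,False)#xs) ((True,True)#ys) = Suc (Suc (hd2 xs ys))"
| "hd2 ((False,False)#xs) ((True,False)#ys) = Suc (hd2 xs ys)"
| "hd2 ((False,False)#xs) ((False,True)#ys) = Suc (hd2 xs ys)"
| "hd2 ((False,False)#xs) ((False,False)#ys) = hd2 xs ys"
| "hd2 _ _ = 0"

fun cnt2 :: "(bool \<times> bool) list \<Rightarrow> nat" where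
  "cnt2 ((True,True)#xs) = Suc (Suc (cnt2 xs))"
| "cnt2 ((True,False)#xs) = Suc (cnt2 xs)"
| "cnt2 ((False,True)#xs) = Suc (cnt2 xs)"
| "cnt2 ((False,False)#xs) = cnt2 xs"
| "cnt2 [] = 0"

fun words2 :: "(bool \<times> bool) list list \<Rightarrow> (bool \<times> bool) list list" where
  "words2 [] = [replicate 20 (False,False)]"
| "words2 (r#rs) = (let ws = words2 rs in ws @ map (xor2 r) ws)"

fun degc2 :: "(bool \<times> bool) list \<Rightarrow> (bool \<times> bool) list list \<Rightarrow> nat" where
  "degc2 L [] = 0"
| "degc2 L (v#vs) = (if hd2 L v = 16 then Suc (degc2 L vs) else degc2 L vs)"

fun cnt14b :: "(bool \<times> bool) list list \<Rightarrow> (bool \<times> bool) list list \<Rightarrow> nat" where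
  "cnt14b [] W = 0"
| "cnt14b (L#Ls) W = (if degc2 L W = 14 then Suc (cnt14b Ls W) else cnt14b Ls W)"

fun c14 :: "(bool \<times> bool) list list \<Rightarrow> nat" where
  "c14 W = cnt14b W W"

lemma degc2_eq: "degc2 L W = length (filter (\<lambda>v. hd2 L v = 16) W)"
  by (induction W) auto

lemma cnt14b_eq: "cnt14b Ls W = length (filter (\<lambda>L. degc2 L W = 14) Ls)"
  by (induction Ls) auto

lemma pr2_xorl: "length r = length w \<Longrightarrow> pr2 (xorl r w) = xor2 (pr2 r) (pr2 w)"
proof (induction r arbitrary: w rule: pr2.induct)
  case (1 a b xs)
  then obtain c d ys where "w = c # d # ys" by (cases w; cases "tl w") auto
  with 1 show ?case by (cases a; cases b; cases c; cases d) auto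
next
  case ("2_1") then show ?case by simp
next
  case ("2_2" a)
  then obtain c where "w = [c]" by (cases w) auto
  then show ?case by simp
qed

lemma cnt_pr2: "even (length L) \<Longrightarrow> cnt L = cnt2 (pr2 L)"
proof (induction L rule: pr2.induct)
  case (1 a b xs) then show ?case by (cases a; cases b) auto
qed auto

lemma hdist_pr2: "length L = length L' \<Longrightarrow> even (length L) \<Longrightarrow> hdist L L' = hd2 (pr2 L) (pr2 L')"
proof (induction L arbitrary: L' rule: pr2.induct)
  case (1 a b xs)
  then obtain c d ys where "L' = c # d # ys" by (cases L'; cases "tl L'") auto
  with 1 show ?case by (cases a; cases b; cases c; cases d) auto
qed auto

lemma pr2_inj: "length L = length L' \<Longrightarrow> even (length L) \<Longrightarrow> pr2 L = pr2 L' \<Longrightarrow> L = L'"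
proof (induction L arbitrary: L' rule: pr2.induct)
  case (1 a b xs)
  then obtain c d ys where "L' = c # d # ys" by (cases L'; cases "tl L'") auto
  with 1 show ?case by auto
qed auto

lemma pr2_rep: "pr2 (replicate 40 False) = replicate 20 (False, False)"
  by (simp add: numeral_eq_Suc)

lemma words2_pr2: "\<forall>r\<in>set rs. length r = 40 \<Longrightarrow> words2 (map pr2 rs) = map pr2 (words rs)"
proof (induction rs)
  case Nil then show ?case by (simp add: pr2_rep)
next
  case (Cons r rs)
  have lr: "length r = 40" using Cons.prems by simp
  have lw: "\<forall>w\<in>set (words rs). length w = 40"
    using words_char[of rs] Cons.prems by (auto simp: mw_def)
  have "map (xor2 (pr2 r)) (map pr2 (words rs)) = map pr2 (map (xorl r) (words rs))"
    using lw lr by (simp add: pr2_xorl)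
  then show ?case using Cons by (simp add: Let_def)
qed

definition chkW :: "(bool \<times> bool) list list \<Rightarrow> nat \<Rightarrow> bool" where
  "chkW W2 v \<longleftrightarrow> (let cw = map (\<lambda>w. (cnt2 w, w)) W2 in
     list_all (\<lambda>(c,w). w = replicate 20 (False,False) \<or> 16 \<le> c) cw \<and>
     c14 (remdups (map snd (filter (\<lambda>(c,w). c = 16) cw))) = v)"

definition chk :: "nat list list \<Rightarrow> nat list \<Rightarrow> nat \<Rightarrow> bool" where
  "chk G Z v \<longleftrightarrow> length G = 8 \<and> list_all (\<lambda>r. length r = 40) G \<and>
    list_all (\<lambda>i. list_all (\<lambda>j. G!i!j = (if i = j then 1 else 0)) [0..<8]) [0..<8] \<and>
    list_all (\<lambda>r. list_all (\<lambda>r'. 4 dvd sum_list (map2 (*) r r')) G) G \<and>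
    list_all (\<lambda>r. 8 dvd sum_list (map wn r)) G \<and>
    list_all (\<lambda>t. odd (sum_list (map (\<lambda>r. r!t) G))) [0..<40] \<and>
    distinct (map (\<lambda>t. map (\<lambda>r. odd (r!t)) G) [0..<40]) \<and>
    (let zv = map (\<lambda>t. if t \<in> set Z then 2 else 0) [0..<40] in
       list_all (\<lambda>r. 4 dvd sum_list (map2 (*) r zv)) G \<and> sum_list (map wn zv) = 16) \<and>
    chkW (words2 (map pr2 (map (map odd) G))) v"


lemma dvd8: "(8::nat) dvd n \<Longrightarrow> int n mod 8 = 0"
  by (auto elim!: dvdE)

lemma sum_list_map_nth: "sum_list (map f G) = (\<Sum>i<length G. f (G!i))"
  by (simp add: sum_list_sum_nth atLeast0LessThan)

lemma map_snd_filter: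
  "\<forall>w\<in>set W. length w = 40 \<Longrightarrow> map snd (filter (\<lambda>(c,w). c = 16) (map (\<lambda>w. (cnt2 w, w)) (map pr2 W))) = map pr2 (filter (\<lambda>L. cnt L = 16) W)"
  by (induction W) (auto simp: cnt_pr2)

lemma chkW_facts:
  assumes lr: "\<forall>r\<in>set rows. length r = 40" and c: "chkW (words2 (map pr2 rows)) v"
  shows "\<forall>w\<in>set (words rows). w = replicate 40 False \<or> 16 \<le> cnt w"
    and "c14 (remdups (map pr2 (filter (\<lambda>L. cnt L = 16) (words rows)))) = v"
proof -
  let ?W = "words rows"
  have lw: "\<forall>w\<in>set ?W. length w = 40" using words_char[OF lr] by (auto simp: mw_def)
  have e: "words2 (map pr2 rows) = map pr2 ?W" by (rule words2_pr2[OF lr])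
  from c have c1: "\<forall>w\<in>set ?W. pr2 w = replicate 20 (False,False) \<or> 16 \<le> cnt2 (pr2 w)"
    and c2: "c14 (remdups (map snd (filter (\<lambda>(c,w). c = 16) (map (\<lambda>w. (cnt2 w, w)) (map pr2 ?W))))) = v"
    unfolding chkW_def Let_def e list_all_iff by auto
  show "\<forall>w\<in>set ?W. w = replicate 40 False \<or> 16 \<le> cnt w"
  proof
    fix w assume w: "w \<in> set ?W"
    then have l: "length w = 40" using lw by blast
    have "pr2 w = pr2 (replicate 40 False) \<or> 16 \<le> cnt w" using c1 w l cnt_pr2[of w] pr2_rep by auto
    then show "w = replicate 40 False \<or> 16 \<le> cnt w" using pr2_inj[of w "replicate 40 False"] l by auto
  qed
  show "c14 (remdups (map pr2 (filter (\<lambda>L. cnt L = 16) ?W))) = v"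
    using c2 map_snd_filter[OF lw] by simp
qed

lemma chk_xcode:
  assumes c: "chk G Z v"
  shows "xcode (gv G) pv 8"
proof -
  define zv where "zv = map (\<lambda>t. if t \<in> set Z then 2 else (0::nat)) [0..<40]"
  define rows where "rows = map (map odd) G"
  have lG: "length G = 8"
    using c unfolding chk_def list_all_iff Let_def zv_def rows_def set_upt by blast
  have lr: "\<forall>r\<in>set G. length r = 40"
    using c unfolding chk_def list_all_iff Let_def zv_def rows_def set_upt by blast
  have piv: "\<forall>i\<in>{0..<8}. \<forall>j\<in>{0..<8}. G!i!j = (if i = j then 1 else 0)"
    using c unfolding chk_def list_all_iff Let_def zv_def rows_def set_upt by blast
  have orth: "\<forall>r\<in>set G. \<forall>r'\<in>set G. 4 dvd sum_list (map2 (*) r r')"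
    using c unfolding chk_def list_all_iff Let_def zv_def rows_def set_upt by blast
  have wts: "\<forall>r\<in>set G. 8 dvd sum_list (map wn r)"
    using c unfolding chk_def list_all_iff Let_def zv_def rows_def set_upt by blast
  have ones: "\<forall>t\<in>{0..<40}. odd (sum_list (map (\<lambda>r. r!t) G))"
    using c unfolding chk_def list_all_iff Let_def zv_def rows_def set_upt by blast
  have dist: "distinct (map (\<lambda>t. map (\<lambda>r. odd (r!t)) G) [0..<40])"
    using c unfolding chk_def list_all_iff Let_def zv_def rows_def set_upt by blast
  have wit1: "\<forall>r\<in>set G. 4 dvd sum_list (map2 (*) r zv)"
    using c unfolding chk_def list_all_iff Let_def zv_def rows_def set_upt by blast
  have wit2: "sum_list (map wn zv) = 16"
    using c unfolding chk_def list_all_iff Let_def zv_def rows_def set_upt by blast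
  have cw: "chkW (words2 (map pr2 rows)) v"
    using c unfolding chk_def list_all_iff Let_def zv_def rows_def set_upt by blast
  have lrows0: "\<forall>r\<in>set rows. length r = 40" using lr by (auto simp: rows_def)
  have mn: "\<forall>w\<in>set (words rows). w = replicate 40 False \<or> 16 \<le> cnt w"
    by (rule chkW_facts(1)[OF lrows0 cw])
  have Gi: "i < 8 \<Longrightarrow> G!i \<in> set G" for i using lG by simp
  have lGi: "i < 8 \<Longrightarrow> length (G!i) = 40" for i using lr Gi by blast
  have gc: "gcode (gv G) pv 8"
  proof
    fix i j :: nat assume ij: "i < 8" "j < 8"
    show "gv G i (pv j) = (if i = j then 1 else 0)"
      using piv ij by (simp add: gv_def vl_def pv_def ix_of_nat)
    show "z4_inner (gv G i) (gv G j) = 0"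
      using orth Gi[OF ij(1)] Gi[OF ij(2)] lGi ij by (simp add: gv_def inner_vl of_nat4_0)
  qed
  have lzv: "length zv = 40" by (simp add: zv_def)
  show ?thesis
  proof (rule xcode.intro[OF gc], rule xcode_axioms.intro)
    fix i assume i: "i < (8::nat)"
    show "int (euclid_wt (gv G i)) mod 8 = 0"
      using wts Gi[OF i] lGi[OF i] by (simp add: gv_def wt_vl dvd8)
  next
    show "\<forall>l. par (\<Sum>i<8. gv G i l)"
    proof
      fix l
      have "(\<Sum>i<8. gv G i l) = of_nat (\<Sum>i<8. G!i!ix l)" by (simp add: gv_def vl_def)
      moreover have "odd (\<Sum>i<8. G!i!ix l)"
        using ones ix_lt[of l] lG by (simp add: sum_list_map_nth)
      ultimately show "par (\<Sum>i<8. gv G i l)" by (metis par_of_nat)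
    qed
  next
    fix b :: "nat \<Rightarrow> bool"
    have lrows: "\<forall>r\<in>set rows. length r = 40" using lr by (auto simp: rows_def)
    have pe: "par (\<Sum>i<8. if b i then gv G i l else 0) = xw rows b (ix l)" for l
      unfolding gv_app rows_def using par_xw[OF lr ix_lt[of l], of b] lG by simp
    assume "\<exists>l. par (\<Sum>i<8. if b i then gv G i l else 0)"
    then obtain l where l: "xw rows b (ix l)" using pe by blast
    have wm: "mw rows b \<in> set (words rows)" using words_char[OF lrows] by simp
    have nz: "mw rows b \<noteq> replicate 40 False"
    proof
      assume "mw rows b = replicate 40 False"
      then have "mw rows b ! ix l = False" using ix_lt[of l] by simp
      then show False using l ix_lt[of l] by (simp add: mw_def)
    qed
    have "card {l. par (\<Sum>i<8. if b i then gv G i l else 0)} = card {t. t < 40 \<and> xw rows b t}"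
      by (simp add: pe card_ix)
    also have "\<dots> = cnt (mw rows b)"
      by (simp add: cnt_eq length_filter_conv_card mw_def cong: conj_cong)
    finally show "16 \<le> card {l. par (\<Sum>i<8. if b i then gv G i l else 0)}"
      using mn wm nz by auto
  next
    fix l l' :: 40 assume ll: "l \<noteq> l'"
    then have "ix l \<noteq> ix l'" using ix_inj by blast
    then have "map (\<lambda>r. odd (r!ix l)) G \<noteq> map (\<lambda>r. odd (r!ix l')) G"
      using dist ix_lt[of l] ix_lt[of l'] by (simp add: distinct_conv_nth)
    then obtain i where i: "i < 8" "odd (G!i!ix l) \<noteq> odd (G!i!ix l')"
      using lG by (auto simp: list_eq_iff_nth_eq)
    then show "\<exists>i<8. par (gv G i l) \<noteq> par (gv G i l')"
      by (auto simp: gv_def vl_def par_of_nat)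
  next
    show "\<exists>w\<in>gcode.C (gv G) pv 8. euclid_wt w = 16"
    proof
      show "euclid_wt (vl zv) = 16" using wit2 lzv by (simp add: wt_vl)
      show "vl zv \<in> gcode.C (gv G) pv 8"
      proof (rule gcode.even_in[OF gc])
        fix l show "2 * vl zv l = 0" using ix_lt[of l] by (simp add: vl_def zv_def)
      next
        fix i assume i: "i < (8::nat)"
        show "z4_inner (gv G i) (vl zv) = 0"
          using wit1 Gi[OF i] lGi[OF i] lzv by (simp add: gv_def inner_vl of_nat4_0)
      qed
    qed
  qed
qed


lemma conv_inj: "length L = 40 \<Longrightarrow> length L' = 40 \<Longrightarrow> conv L = conv L' \<Longrightarrow> L = L'"
proof -
  assume l: "length L = 40" "length L' = 40" and e: "conv L = conv L'"
  show "L = L'"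
  proof (rule nth_equalityI)
    show "length L = length L'" using l by simp
    fix t assume "t < length L"
    then have t: "t < 40" using l by simp
    have "conv L (of_nat t) = conv L' (of_nat t)" using e by simp
    then show "L ! t = L' ! t" using t by (simp add: conv_def ix_of_nat)
  qed
qed

lemma bw_conv: "length L = 40 \<Longrightarrow> bw (conv L) = cnt L"
  by (simp add: bw_def conv_def card_ix cnt_eq length_filter_conv_card)

lemma bd_conv: "length L = 40 \<Longrightarrow> length L' = 40 \<Longrightarrow> bd (conv L) (conv L') = hdist L L'"
  unfolding bd_def conv_def card_ix[of "\<lambda>t. L!t \<noteq> L'!t"]
  by (simp add: hdist_eq length_filter_conv_card cong: conj_cong)

lemma inv_conv:
  assumes lw: "\<forall>L\<in>set W. length L = 40"
  shows "inv16 (conv ` set W) = c14 (remdups (map pr2 (filter (\<lambda>L. cnt L = 16) W)))"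
proof -
  let ?A = "set W"
  have inj: "inj_on conv ?A" using lw conv_inj by (auto intro: inj_onI)
  have cimg: "X \<subseteq> ?A \<Longrightarrow> card (conv ` X) = card X" for X
    by (rule card_image) (rule inj_on_subset[OF inj])
  have inner: "card (conv ` {s \<in> ?A. bw (conv s) = 16 \<and> bd (conv L) (conv s) = 16}) = card {L' \<in> ?A. cnt L' = 16 \<and> hdist L L' = 16}"
    if L: "L \<in> ?A" for L
  proof -
    have "{s \<in> ?A. bw (conv s) = 16 \<and> bd (conv L) (conv s) = 16} = {L' \<in> ?A. cnt L' = 16 \<and> hdist L L' = 16}"
      using L lw by (auto simp: bw_conv bd_conv)
    then show ?thesis by (simp add: cimg)
  qed
  have "{r \<in> conv ` ?A. bw r = 16 \<and> card {s \<in> conv ` ?A. bw s = 16 \<and> bd r s = 16} = 14}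
      = conv ` {L \<in> ?A. cnt L = 16 \<and> card {L' \<in> ?A. cnt L' = 16 \<and> hdist L L' = 16} = 14}"
    unfolding image_filter using lw inner by (auto simp: bw_conv)
  then have "inv16 (conv ` ?A) = card {L \<in> ?A. cnt L = 16 \<and> card {L' \<in> ?A. cnt L' = 16 \<and> hdist L L' = 16} = 14}"
    unfolding inv16_def by (simp add: cimg)
  also have "\<dots> = c14 (remdups (map pr2 (filter (\<lambda>L. cnt L = 16) W)))"
  proof -
    define W16 where "W16 = remdups (map pr2 (filter (\<lambda>L. cnt L = 16) W))"
    have dW: "distinct W16" by (simp add: W16_def)
    have sW: "set W16 = pr2 ` {L \<in> ?A. cnt L = 16}" by (auto simp: W16_def)
    have inj2: "inj_on pr2 ?A" using lw pr2_inj by (auto intro!: inj_onI)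
    have hd: "hd2 (pr2 L) (pr2 L') = hdist L L'" if "L \<in> ?A" "L' \<in> ?A" for L L'
      using hdist_pr2[of L L'] lw that by simp
    have in1: "degc2 (pr2 L) W16 = card {L' \<in> ?A. cnt L' = 16 \<and> hdist L L' = 16}" if L: "L \<in> ?A" for L
    proof -
      have "set (filter (\<lambda>v. hd2 (pr2 L) v = 16) W16) = pr2 ` {L' \<in> {L \<in> ?A. cnt L = 16}. hd2 (pr2 L) (pr2 L') = 16}"
        unfolding set_filter sW image_filter ..
      also have "{L' \<in> {L \<in> ?A. cnt L = 16}. hd2 (pr2 L) (pr2 L') = 16} = {L' \<in> ?A. cnt L' = 16 \<and> hdist L L' = 16}"
        using hd L by auto
      finally have "set (filter (\<lambda>v. hd2 (pr2 L) v = 16) W16) = pr2 ` {L' \<in> ?A. cnt L' = 16 \<and> hdist L L' = 16}" .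
      then have "degc2 (pr2 L) W16 = card (pr2 ` {L' \<in> ?A. cnt L' = 16 \<and> hdist L L' = 16})"
        unfolding degc2_eq using distinct_card[OF distinct_filter[OF dW], of "\<lambda>v. hd2 (pr2 L) v = 16"] by simp
      also have "\<dots> = card {L' \<in> ?A. cnt L' = 16 \<and> hdist L L' = 16}"
        by (rule card_image) (rule inj_on_subset[OF inj2], auto)
      finally show ?thesis .
    qed
    have "set (filter (\<lambda>P. degc2 P W16 = 14) W16) = pr2 ` {L \<in> {L \<in> ?A. cnt L = 16}. degc2 (pr2 L) W16 = 14}"
      unfolding set_filter sW image_filter ..
    also have "{L \<in> {L \<in> ?A. cnt L = 16}. degc2 (pr2 L) W16 = 14} = {L \<in> ?A. cnt L = 16 \<and> card {L' \<in> ?A. cnt L' = 16 \<and> hdist L L' = 16} = 14}"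
      using in1 by auto
    finally have "set (filter (\<lambda>P. degc2 P W16 = 14) W16) = pr2 ` {L \<in> ?A. cnt L = 16 \<and> card {L' \<in> ?A. cnt L' = 16 \<and> hdist L L' = 16} = 14}" .
    then have "c14 W16 = card (pr2 ` {L \<in> ?A. cnt L = 16 \<and> card {L' \<in> ?A. cnt L' = 16 \<and> hdist L L' = 16} = 14})"
      unfolding c14.simps cnt14b_eq using distinct_card[OF distinct_filter[OF dW], of "\<lambda>P. degc2 P W16 = 14"] by simp
    also have "\<dots> = card {L \<in> ?A. cnt L = 16 \<and> card {L' \<in> ?A. cnt L' = 16 \<and> hdist L L' = 16} = 14}"
      by (rule card_image) (rule inj_on_subset[OF inj2], auto)
    finally show ?thesis unfolding W16_def by simp
  qed
  finally show ?thesis .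
qed

lemma chk_inv:
  assumes c: "chk G Z v"
  shows "inv16 (res (gcode.C (gv G) pv 8)) = v"
proof -
  have xc: "xcode (gv G) pv 8" by (rule chk_xcode[OF c])
  define rows where "rows = map (map odd) G"
  have lG: "length G = 8" and lr: "\<forall>r\<in>set G. length r = 40"
    and cw: "chkW (words2 (map pr2 rows)) v"
    using c unfolding chk_def list_all_iff Let_def rows_def by simp_all
  have lrows: "\<forall>r\<in>set rows. length r = 40" using lr by (auto simp: rows_def)
  have ci: "c14 (remdups (map pr2 (filter (\<lambda>L. cnt L = 16) (words rows)))) = v"
    by (rule chkW_facts(2)[OF lrows cw])
  have eq: "(\<lambda>l. par (\<Sum>i<8. if b i then gv G i l else 0)) = conv (mw rows b)" for b
  proof
    fix l
    show "par (\<Sum>i<8. if b i then gv G i l else 0) = conv (mw rows b) l"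
      unfolding gv_app rows_def conv_def mw_def using par_xw[OF lr ix_lt[of l], of b] lG ix_lt[of l] by simp
  qed
  have "res (gcode.C (gv G) pv 8) = {(\<lambda>l. par (\<Sum>i<8. if b i then gv G i l else 0)) | b. True}"
    unfolding res_def by (rule xcode.res_C[OF xc])
  also have "\<dots> = conv ` set (words rows)"
    unfolding words_char[OF lrows] eq by auto
  finally have "inv16 (res (gcode.C (gv G) pv 8)) = inv16 (conv ` set (words rows))" by simp
  also have "\<dots> = c14 (remdups (map pr2 (filter (\<lambda>L. cnt L = 16) (words rows))))"
  proof (rule inv_conv)
    show "\<forall>L\<in>set (words rows). length L = 40" using words_char[OF lrows] by (auto simp: mw_def)
  qed
  finally show ?thesis using ci by simp
qed




definition G0 :: "nat list list" where "G0 = [[1, 0, 0, 0, 0, 0, 0, 0, 1, 1, 1, 0, 1, 0, 0, 0, 1, 1, 0, 0, 1, 0, 1, 0, 0, 0, 1, 0, 1, 1, 0, 1, 0, 0, 0, 1, 1, 0, 1, 0], [0, 1, 0, 0, 0, 0, 0, 0, 0, 1, 0, 1, 1, 1, 0, 1, 0, 0, 0, 1, 1, 0, 0, 1, 0, 1, 0, 0, 1, 0, 1, 1, 0, 1, 0, 0, 0, 0, 3, 1], [0, 0, 1, 0, 0, 0, 0, 0, 1, 0, 0, 0, 0, 1, 1, 0, 0, 1, 0, 1, 1, 1, 0, 0, 1, 0, 0, 1, 1, 1, 0, 1, 0, 1, 0, 1, 1, 2, 0, 2], [0, 0, 0, 1, 0, 0, 0, 0, 0, 0, 1, 1, 0,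 0, 1, 1, 1, 0, 0, 0, 1, 1, 1, 1, 0, 0, 0, 0, 0, 1, 0, 0, 1, 1, 1, 1, 0, 2, 2, 1], [0, 0, 0, 0, 1, 0, 0, 0, 1, 0, 0, 1, 1, 0, 0, 0, 0, 1, 1, 0, 0, 1, 0, 0, 0, 1, 0, 1, 1, 1, 1, 0, 1, 3, 0, 1, 0, 1, 2, 2], [0, 0, 0, 0, 0, 1, 0, 0, 0, 1, 1, 0, 1, 0, 0, 0, 0, 1, 1, 0, 0, 1, 0, 0, 1, 0, 1, 0, 0, 2, 1, 0, 1, 1, 0, 3, 1, 2, 1, 1], [0, 0, 0, 0, 0, 0, 1, 0, 0, 0, 0, 0, 1, 1, 1, 1, 1, 0, 0, 0, 0, 0, 0, 0, 0, 0, 0, 0, 0, 0, 1, 1, 1, 1, 1, 3, 1, 3, 1, 3], [0, 0, 0, 0, 0, 0, 0, 1, 0, 0, 0, 0, 0, 0, 0, 0, 0, 1, 1, 1, 1, 1, 1, 1, 1, 1, 1, 1, 1, 1, 1, 1, 1, 3, 1, 3, 1, 3, 1, 3]]"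
lemma chk_0: "chk G0 [0, 1, 5, 9] 0" by code_simp

definition G1 :: "nat list list" where "G1 = [[1, 0, 0, 0, 0, 0, 0, 0, 0, 0, 0, 0, 1, 0, 0, 1, 1, 0, 1, 0, 1, 0, 1, 1, 0, 1, 1, 0, 1, 0, 0, 1, 0, 1, 0, 0, 1, 1, 1, 0], [0, 1, 0, 0, 0, 0, 0, 0, 0, 1, 1, 1, 1, 1, 1, 0, 0, 1, 1, 0, 1, 0, 0, 0, 1, 0, 0, 1, 0, 0, 1, 0, 0, 1, 0, 1, 0, 0, 0, 1], [0, 0, 1, 0, 0, 0, 0, 0, 1, 0, 0, 1, 0, 0, 1, 0, 0, 1, 1, 0, 0, 1, 0, 1, 0, 1, 0, 1, 1, 0, 0, 0, 1, 1, 0, 1, 0, 3, 0, 1], [0, 0, 0, 1, 0, 0, 0, 0, 1, 1, 0, 1, 1, 1, 1, 1, 0, 1, 1, 1, 1, 0, 1, 0, 0, 1, 0, 1, 1, 0, 0, 0, 1, 0, 1, 1, 1, 0, 0, 2], [0, 0, 0, 0, 1, 0, 0, 0, 0, 0, 1, 1, 1, 0, 1, 0, 0, 0, 1, 0, 0, 1, 0, 0, 1, 1, 1, 0, 0, 1, 0, 0, 1, 1, 1, 1, 0, 0, 3, 0], [0, 0, 0, 0, 0, 1, 0, 0, 1, 1, 1, 1, 0, 0, 0, 0, 1, 1, 1, 1, 1, 0, 0, 0, 0, 0, 0, 1, 1, 1, 0, 0, 2, 1, 1, 1, 1, 1, 1, 3], [0, 0, 0, 0, 0, 0, 1, 0,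 0, 0, 0, 0, 1, 1, 1, 1, 1, 1, 1, 1, 1, 0, 0, 0, 0, 0, 0, 0, 0, 2, 1, 1, 1, 1, 3, 1, 1, 1, 3, 3], [0, 0, 0, 0, 0, 0, 0, 1, 0, 0, 0, 0, 0, 0, 0, 0, 0, 0, 0, 0, 2, 1, 1, 1, 1, 1, 1, 1, 1, 1, 1, 1, 1, 1, 1, 1, 1, 1, 1, 1]]"
lemma chk_1: "chk G1 [0, 1, 13, 15] 5" by code_simp

definition G2 :: "nat list list" where "G2 = [[1, 0, 0, 0, 0, 0, 0, 0, 0, 1, 1, 1, 1, 0, 1, 0, 1, 0, 1, 1, 1, 1, 1, 0, 1, 0, 1, 0, 1, 0, 1, 1, 0, 1, 0, 1, 0, 0, 1, 2], [0, 1, 0, 0, 0, 0, 0, 0, 0, 1, 1, 1, 1, 0, 1, 1, 0, 1, 1, 1, 0, 1, 0, 1, 0, 0, 1, 1, 0, 1, 1, 1, 0, 0, 1, 0, 1, 0, 1, 2], [0, 0, 1, 0, 0, 0, 0, 0, 1, 1, 0, 0, 1, 1, 1, 1, 1, 0, 0, 0, 0, 0, 1, 1, 0, 1, 0, 0, 0, 1, 1, 0, 0, 1, 1, 1, 0, 0, 0, 0], [0, 0, 0, 1, 0, 0, 0, 0, 1, 0, 1, 0, 0, 1, 1, 1, 1, 0, 0, 1, 0, 0, 0, 0, 1, 1, 0, 0, 1, 1, 0, 0, 1, 0, 0, 1, 2, 2, 3, 1], [0, 0, 0, 0, 1, 0, 0, 0, 0, 1, 1, 0, 1, 0, 0, 1,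 1, 1, 1, 0, 0, 0, 0, 0, 0, 1, 1, 0, 1, 0, 0, 1, 0, 0, 0, 3, 3, 0, 3, 1], [0, 0, 0, 0, 0, 1, 0, 0, 1, 1, 0, 0, 0, 0, 0, 0, 0, 0, 1, 1, 1, 0, 0, 0, 0, 1, 1, 1, 0, 0, 0, 0, 0, 1, 1, 3, 3, 1, 1, 3], [0, 0, 0, 0, 0, 0, 1, 0, 0, 0, 1, 1, 1, 1, 1, 1, 1, 1, 1, 1, 1, 0, 0, 0, 0, 0, 0, 0, 1, 1, 1, 1, 3, 1, 1, 3, 3, 3, 3, 1], [0, 0, 0, 0, 0, 0, 0, 1, 0, 0, 0, 0, 0, 0, 0, 0, 0, 0, 0, 0, 2, 1, 1, 1, 1, 1, 1, 1, 1, 1, 1, 1, 3, 1, 1, 1, 3, 1, 3, 3]]"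
lemma chk_2: "chk G2 [0, 1, 6, 11] 6" by code_simp

definition G3 :: "nat list list" where "G3 = [[1, 0, 0, 0, 0, 0, 0, 0, 1, 0, 1, 1, 1, 1, 0, 0, 0, 1, 1, 0, 0, 1, 1, 1, 0, 1, 1, 1, 0, 0, 1, 1, 0, 0, 1, 0, 2, 1, 1, 1], [0, 1, 0, 0, 0, 0, 0, 0, 0, 0, 0, 0, 1, 0, 1, 1, 0, 0, 1, 0, 1, 0, 1, 0, 0, 1, 1, 0, 1, 1, 0, 1, 1, 0, 1, 1, 0, 0, 1, 0], [0, 0, 1, 0, 0, 0, 0, 0, 1, 1, 0, 0, 0, 0, 0, 0, 1, 1, 0, 0, 1, 1, 1, 0, 1, 1, 0, 1, 1, 1, 0, 1, 0, 0, 0, 1, 0, 0, 1, 0], [0, 0, 0, 1, 0, 0, 0, 0, 1, 1, 1, 1, 0, 1, 1, 1, 0, 1, 1, 1, 1, 0, 1, 1, 1, 0, 1, 1, 1, 1, 0, 0, 0, 1, 1, 0, 0, 1, 3, 1], [0, 0, 0, 0, 1, 0, 0, 0, 0, 1, 1, 0, 1, 0, 0, 1, 1, 1, 0, 0, 1, 1, 1, 1, 0, 1, 0, 0, 1, 0, 0, 0, 1, 3, 1, 1, 1, 2, 3, 1], [0, 0, 0, 0, 0, 1, 0, 0, 0, 0, 0, 1, 1, 0, 0, 1, 0, 0, 1, 1, 0, 1, 1, 1, 0, 0, 1, 1, 0, 3, 0, 0, 1, 1, 1, 0, 0, 3, 2, 2], [0, 0, 0, 0, 0, 0, 1, 0,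 0, 0, 0, 0, 1, 1, 1, 1, 1, 1, 1, 1, 1, 0, 0, 0, 0, 0, 0, 0, 0, 2, 1, 1, 1, 1, 1, 1, 3, 1, 1, 1], [0, 0, 0, 0, 0, 0, 0, 1, 0, 0, 0, 0, 0, 0, 0, 0, 0, 0, 0, 0, 2, 1, 1, 1, 1, 1, 1, 1, 1, 1, 1, 1, 1, 3, 1, 1, 1, 1, 1, 3]]"
lemma chk_3: "chk G3 [0, 1, 13, 14] 7" by code_simp

definition G4 :: "nat list list" where "G4 = [[1, 0, 0, 0, 0, 0, 0, 0, 1, 0, 1, 1, 1, 0, 1, 1, 0, 1, 1, 1, 0, 0, 1, 0, 1, 0, 0, 0, 1, 0, 1, 1, 1, 0, 1, 1, 0, 1, 2, 1], [0, 1, 0, 0, 0, 0, 0, 0, 1, 1, 0, 0, 1, 1, 1, 1, 1, 0, 1, 0, 1, 0, 0, 0, 1, 0, 0, 0, 0, 1, 0, 1, 0, 1, 1, 0, 1, 0, 0, 0], [0, 0, 1, 0, 0, 0, 0, 0, 0, 1, 1, 1, 1, 0, 0, 0, 1, 1, 1, 0, 0, 0, 0, 1, 1, 1, 1, 1, 0, 0, 0, 0, 0, 0, 0, 1, 3, 1, 0, 0], [0, 0, 0, 1, 0, 0, 0, 0, 1, 1, 0, 1, 0, 1, 1, 0, 1, 0, 1, 1, 1, 1, 0, 1, 0, 0, 0, 1, 0, 1, 1, 0, 0, 1, 1, 1, 2, 3, 0, 1], [0, 0, 0, 0, 1, 0, 0, 0, 0, 1, 0, 1, 1, 0, 1, 0,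 1, 0, 0, 0, 0, 1, 1, 0, 1, 1, 0, 1, 0, 1, 1, 1, 0, 1, 0, 0, 0, 1, 0, 0], [0, 0, 0, 0, 0, 1, 0, 0, 0, 1, 1, 1, 1, 1, 0, 0, 0, 0, 0, 0, 0, 0, 0, 0, 0, 0, 1, 1, 1, 1, 1, 3, 0, 0, 0, 0, 1, 3, 1, 3], [0, 0, 0, 0, 0, 0, 1, 0, 0, 0, 0, 0, 0, 0, 1, 1, 1, 1, 1, 1, 1, 0, 0, 0, 0, 0, 0, 0, 0, 0, 0, 0, 1, 3, 1, 1, 3, 3, 3, 3], [0, 0, 0, 0, 0, 0, 0, 1, 0, 0, 0, 0, 0, 0, 0, 0, 0, 0, 0, 0, 2, 1, 1, 1, 1, 1, 1, 1, 1, 1, 1, 1, 1, 1, 1, 1, 1, 3, 1, 3]]"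
lemma chk_4: "chk G4 [0, 1, 3, 8] 8" by code_simp

definition G5 :: "nat list list" where "G5 = [[1, 0, 0, 0, 0, 0, 0, 0, 0, 0, 1, 1, 1, 1, 0, 0, 0, 0, 1, 1, 1, 0, 0, 1, 1, 1, 1, 1, 1, 1, 0, 0, 1, 1, 1, 0, 0, 2, 1, 1], [0, 1, 0, 0, 0, 0, 0, 0, 1, 0, 0, 1, 1, 0, 1, 0, 1, 1, 1, 1, 1, 1, 0, 1, 0, 1, 0, 1, 0, 0, 1, 1, 0, 1, 0, 1, 1, 0, 2, 1], [0, 0, 1, 0, 0, 0, 0, 0, 1, 1, 0, 0, 0, 0, 0, 1, 1, 0, 0, 1, 0, 1, 0, 1, 0, 1, 1, 1, 1, 0, 1, 0, 1, 0, 0, 1, 0, 2, 2, 3], [0, 0, 0, 1, 0, 0, 0, 0, 0, 1, 1, 0, 0, 1, 1, 1, 0, 1, 0, 0, 1, 0, 0, 1, 1, 1, 1, 0, 1, 0, 1, 0, 1, 1, 0, 1, 3, 2, 3, 3], [0, 0, 0, 0, 1, 0, 0, 0, 1, 0, 0, 1, 0, 1, 1, 1, 0, 0, 1, 0, 1, 1, 1, 0, 0, 1, 1, 1, 0, 0, 1, 0, 0, 0, 1, 3, 2, 2, 2, 2], [0, 0, 0, 0, 0, 1, 0, 0, 0, 1, 1, 0, 1, 0, 1, 1, 0, 0, 1, 1, 0, 1, 1, 0, 0, 1, 0, 0, 1, 1, 0, 1, 0, 2, 1, 3, 1, 1, 3, 1], [0, 0, 0, 0, 0, 0, 1, 0,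 0, 0, 0, 0, 0, 0, 1, 1, 1, 1, 1, 1, 1, 0, 0, 0, 0, 0, 0, 0, 0, 0, 0, 0, 1, 1, 1, 1, 1, 3, 3, 1], [0, 0, 0, 0, 0, 0, 0, 1, 0, 0, 0, 0, 0, 0, 0, 0, 0, 0, 0, 0, 2, 1, 1, 1, 1, 1, 1, 1, 1, 1, 1, 1, 1, 1, 1, 1, 3, 1, 1, 1]]"
lemma chk_5: "chk G5 [0, 1, 4, 11] 9" by code_simp

definition G6 :: "nat list list" where "G6 = [[1, 0, 0, 0, 0, 0, 0, 0, 1, 1, 1, 0, 0, 0, 0, 0, 1, 1, 1, 0, 1, 0, 1, 0, 0, 0, 0, 1, 1, 1, 1, 0, 0, 1, 0, 0, 1, 0, 0, 1], [0, 1, 0, 0, 0, 0, 0, 0, 1, 1, 1, 1, 0, 1, 0, 0, 1, 0, 0, 1, 0, 1, 0, 1, 1, 0, 1, 0, 0, 0, 1, 0, 1, 1, 0, 0, 0, 2, 1, 2], [0, 0, 1, 0, 0, 0, 0, 0, 0, 0, 0, 1, 1, 0, 0, 1, 1, 0, 0, 0, 1, 1, 1, 0, 0, 1, 1, 1, 0, 0, 1, 1, 1, 0, 0, 0, 3, 1, 0, 0], [0, 0, 0, 1, 0, 0, 0, 0, 0, 1, 0, 1, 1, 1, 1, 1, 0, 0, 0, 0, 1, 0, 0, 1, 0, 0, 0, 0, 1, 0, 1, 1, 1, 0, 1, 1, 0, 1, 0, 0], [0, 0, 0, 0, 1, 0, 0, 0, 1, 0, 0, 1, 0, 0, 1, 0,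 1, 1, 0, 0, 0, 0, 0, 0, 1, 0, 1, 1, 1, 0, 1, 1, 0, 1, 2, 1, 2, 0, 3, 3], [0, 0, 0, 0, 0, 1, 0, 0, 0, 0, 1, 1, 1, 1, 0, 0, 0, 0, 1, 1, 1, 0, 0, 0, 0, 1, 1, 1, 0, 0, 0, 0, 0, 0, 0, 1, 1, 3, 3, 3], [0, 0, 0, 0, 0, 0, 1, 0, 0, 0, 0, 0, 0, 0, 1, 1, 1, 1, 1, 1, 1, 0, 0, 0, 0, 0, 0, 2, 1, 1, 1, 1, 1, 1, 1, 1, 3, 3, 3, 3], [0, 0, 0, 0, 0, 0, 0, 1, 0, 0, 0, 0, 0, 0, 0, 0, 0, 0, 0, 0, 2, 1, 1, 1, 1, 1, 1, 1, 1, 1, 1, 1, 1, 1, 1, 1, 1, 3, 1, 3]]"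
lemma chk_6: "chk G6 [0, 1, 3, 9] 10" by code_simp

definition G7 :: "nat list list" where "G7 = [[1, 0, 0, 0, 0, 0, 0, 0, 1, 0, 0, 0, 1, 1, 1, 0, 1, 0, 1, 0, 1, 1, 1, 1, 0, 1, 1, 0, 1, 0, 1, 0, 0, 1, 1, 0, 1, 2, 1, 1], [0, 1, 0, 0, 0, 0, 0, 0, 1, 1, 1, 1, 1, 1, 1, 0, 1, 1, 0, 1, 1, 1, 0, 0, 1, 0, 0, 1, 0, 0, 0, 1, 1, 0, 1, 0, 1, 0, 1, 2], [0, 0, 1, 0, 0, 0, 0, 0, 0, 0, 1, 1, 0, 0, 1, 1, 1, 1, 1, 0, 0, 1, 1, 0, 0, 1, 0, 0, 0, 0, 0, 0, 1, 1, 0, 1, 3, 1, 2, 2], [0, 0, 0, 1, 0, 0, 0, 0, 1, 0, 1, 0, 1, 0, 0, 1, 1, 1, 1, 0, 0, 0, 0, 0, 1, 1, 1, 0, 0, 0, 1, 1, 1, 0, 0, 2, 0, 1, 2, 1], [0, 0, 0, 0, 1, 0, 0, 0, 1, 1, 1, 0, 1, 0, 1, 0, 0, 1, 1, 1, 1, 1, 0, 1, 0, 0, 1, 0, 0, 1, 1, 1, 0, 1, 1, 1, 1, 2, 0, 0], [0, 0, 0, 0, 0, 1, 0, 0, 1, 1, 1, 1, 0, 0, 0, 0, 0, 0, 0, 0, 1, 0, 0, 0, 0, 1, 1, 1, 1, 1, 0, 0, 0, 0, 0, 1, 3, 3, 1, 1], [0, 0, 0, 0, 0, 0, 1, 0,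 0, 0, 0, 0, 1, 1, 1, 1, 1, 1, 1, 1, 1, 0, 0, 0, 0, 0, 0, 0, 0, 2, 1, 1, 1, 1, 3, 3, 1, 3, 1, 1], [0, 0, 0, 0, 0, 0, 0, 1, 0, 0, 0, 0, 0, 0, 0, 0, 0, 0, 0, 0, 2, 1, 1, 1, 1, 1, 1, 1, 1, 1, 1, 1, 1, 1, 1, 1, 3, 1, 3, 1]]"
lemma chk_7: "chk G7 [0, 1, 6, 13] 11" by code_simp

definition G8 :: "nat list list" where "G8 = [[1, 0, 0, 0, 0, 0, 0, 0, 1, 1, 0, 0, 1, 0, 1, 0, 1, 1, 0, 1, 0, 1, 0, 1, 1, 0, 1, 0, 0, 0, 0, 1, 0, 1, 0, 0, 1, 1, 0, 0], [0, 1, 0, 0, 0, 0, 0, 0, 1, 0, 1, 1, 0, 1, 0, 1, 0, 1, 0, 1, 1, 0, 1, 0, 1, 1, 0, 1, 0, 0, 1, 0, 1, 1, 0, 1, 2, 1, 1, 1], [0, 0, 1, 0, 0, 0, 0, 0, 0, 1, 0, 1, 1, 0, 0, 0, 0, 1, 1, 0, 1, 0, 0, 0, 1, 1, 0, 0, 1, 0, 1, 0, 0, 1, 1, 1, 0, 3, 0, 1], [0, 0, 0, 1, 0, 0, 0, 0, 0, 0, 1, 0, 0, 1, 1, 0, 0, 1, 1, 0, 0, 1, 1, 1, 0, 1, 0, 0, 0, 1, 1, 0, 0, 0, 1, 0, 3, 1, 3, 0], [0, 0, 0, 0, 1, 0, 0, 0, 0, 1, 1, 1, 1, 0, 0, 1,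 0, 0, 0, 0, 1, 1, 0, 0, 0, 0, 0, 0, 1, 1, 1, 1, 1, 0, 1, 0, 0, 0, 1, 1], [0, 0, 0, 0, 0, 1, 0, 0, 1, 0, 0, 0, 1, 0, 0, 0, 1, 0, 0, 0, 1, 1, 0, 0, 1, 1, 0, 0, 1, 1, 1, 1, 1, 0, 0, 1, 3, 3, 0, 0], [0, 0, 0, 0, 0, 0, 1, 0, 0, 0, 0, 0, 1, 1, 1, 1, 1, 0, 0, 0, 0, 0, 0, 0, 0, 2, 1, 1, 1, 1, 1, 1, 1, 1, 1, 1, 1, 1, 3, 1], [0, 0, 0, 0, 0, 0, 0, 1, 0, 0, 0, 0, 0, 0, 0, 0, 0, 1, 1, 1, 1, 1, 1, 1, 1, 1, 1, 1, 1, 1, 1, 1, 1, 1, 1, 3, 3, 1, 3, 1]]"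
lemma chk_8: "chk G8 [0, 1, 5, 8] 12" by code_simp

definition G9 :: "nat list list" where "G9 = [[1, 0, 0, 0, 0, 0, 0, 0, 1, 0, 1, 0, 0, 1, 0, 0, 1, 0, 1, 1, 0, 0, 1, 0, 0, 0, 1, 1, 1, 0, 1, 0, 0, 0, 1, 1, 1, 0, 1, 0], [0, 1, 0, 0, 0, 0, 0, 0, 1, 0, 0, 1, 0, 1, 1, 1, 0, 0, 1, 0, 0, 0, 0, 0, 1, 1, 0, 0, 0, 1, 1, 1, 0, 1, 0, 1, 0, 0, 3, 1], [0, 0, 1, 0, 0, 0, 0, 0, 1, 0, 0, 0, 1, 1, 1, 1, 1, 0, 0, 0, 1, 1, 0, 0, 1, 0, 0, 0, 0, 0, 1, 1, 1, 0, 0, 0, 1, 1, 3, 0], [0, 0, 0, 1, 0, 0, 0, 0, 0, 1, 1, 1, 1, 1, 1, 0, 0, 1, 1, 1, 0, 1, 0, 1, 0, 1, 1, 0, 1, 1, 0, 0, 1, 0, 0, 1, 1, 2, 0, 1], [0, 0, 0, 0, 1, 0, 0, 0, 0, 1, 0, 0, 0, 0, 1, 0, 0, 1, 1, 0, 1, 0, 1, 0, 1, 0, 0, 1, 1, 1, 0, 1, 1, 0, 0, 0, 3, 1, 1, 0], [0, 0, 0, 0, 0, 1, 0, 0, 0, 1, 1, 1, 1, 1, 0, 0, 0, 0, 0, 0, 0, 0, 0, 1, 1, 0, 0, 0, 1, 1, 1, 1, 0, 0, 0, 0, 1, 1, 3, 1], [0, 0, 0, 0, 0, 0, 1, 0,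 0, 0, 0, 0, 0, 0, 1, 1, 1, 1, 1, 1, 1, 1, 1, 1, 1, 0, 0, 0, 0, 0, 0, 2, 1, 1, 1, 1, 1, 3, 1, 1], [0, 0, 0, 0, 0, 0, 0, 1, 0, 0, 0, 0, 0, 0, 0, 0, 0, 0, 0, 0, 0, 0, 0, 0, 0, 1, 1, 1, 1, 1, 3, 1, 1, 1, 1, 1, 1, 1, 3, 3]]"
lemma chk_9: "chk G9 [0, 1, 2, 8] 13" by code_simp

definition G10 :: "nat list list" where "G10 = [[1, 0, 0, 0, 0, 0, 0, 0, 0, 1, 1, 1, 1, 1, 0, 0, 1, 0, 1, 0, 0, 1, 0, 1, 0, 1, 1, 0, 1, 0, 0, 1, 0, 0, 0, 0, 1, 1, 0, 0], [0, 1, 0, 0, 0, 0, 0, 0, 1, 0, 1, 0, 1, 0, 0, 1, 1, 1, 0, 1, 0, 0, 1, 0, 0, 0, 1, 1, 0, 0, 0, 1, 0, 1, 1, 0, 0, 3, 0, 1], [0, 0, 1, 0, 0, 0, 0, 0, 0, 0, 0, 1, 1, 0, 1, 0, 1, 0, 1, 1, 1, 1, 0, 0, 1, 1, 0, 1, 0, 1, 1, 1, 1, 0, 1, 1, 0, 1, 2, 3], [0, 0, 0, 1, 0, 0, 0, 0, 1, 1, 0, 0, 0, 0, 1, 1, 0, 0, 1, 1, 1, 0, 1, 1, 0, 1, 1, 1, 0, 0, 1, 1, 0, 0, 1, 3, 1, 1, 2, 1], [0, 0, 0, 0, 1, 0, 0, 0, 1, 1, 0, 0, 1, 1, 0, 0,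 1, 1, 1, 1, 1, 0, 0, 0, 1, 1, 1, 0, 0, 0, 1, 1, 0, 0, 0, 0, 2, 2, 0, 3], [0, 0, 0, 0, 0, 1, 0, 0, 0, 0, 1, 1, 1, 1, 0, 0, 0, 0, 0, 0, 1, 0, 0, 0, 0, 0, 0, 1, 1, 1, 1, 3, 0, 0, 0, 3, 3, 1, 1, 3], [0, 0, 0, 0, 0, 0, 1, 0, 0, 0, 0, 0, 0, 0, 1, 1, 1, 1, 1, 1, 1, 0, 0, 0, 0, 0, 0, 0, 0, 0, 0, 0, 1, 1, 3, 1, 1, 1, 1, 1], [0, 0, 0, 0, 0, 0, 0, 1, 0, 0, 0, 0, 0, 0, 0, 0, 0, 0, 0, 0, 2, 1, 1, 1, 1, 1, 1, 1, 1, 1, 1, 1, 1, 1, 1, 1, 1, 1, 3, 3]]"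
lemma chk_10: "chk G10 [0, 1, 5, 10] 14" by code_simp

definition G11 :: "nat list list" where "G11 = [[1, 0, 0, 0, 0, 0, 0, 0, 1, 0, 1, 1, 1, 1, 0, 1, 1, 1, 0, 1, 1, 0, 1, 0, 1, 0, 1, 0, 1, 1, 0, 1, 0, 0, 1, 0, 1, 0, 2, 1], [0, 1, 0, 0, 0, 0, 0, 0, 0, 1, 0, 1, 1, 0, 0, 1, 1, 1, 1, 0, 0, 1, 1, 0, 1, 1, 0, 0, 1, 0, 0, 1, 1, 1, 0, 1, 2, 1, 1, 3], [0, 0, 1, 0, 0, 0, 0, 0, 1, 1, 0, 1, 1, 0, 1, 1, 1, 0, 1, 0, 1, 1, 0, 0, 0, 0, 0, 1, 1, 1, 1, 1, 1, 1, 1, 0, 0, 2, 3, 0], [0, 0, 0, 1, 0, 0, 0, 0, 0, 0, 0, 0, 1, 1, 0, 0, 1, 0, 0, 1, 1, 1, 1, 1, 1, 0, 0, 0, 1, 0, 0, 0, 1, 0, 0, 1, 1, 1, 0, 3], [0, 0, 0, 0, 1, 0, 0, 0, 1, 0, 1, 1, 0, 0, 1, 0, 1, 0, 0, 0, 1, 1, 1, 1, 0, 0, 0, 0, 1, 1, 0, 0, 0, 1, 1, 1, 2, 0, 2, 1], [0, 0, 0, 0, 0, 1, 0, 0, 0, 1, 1, 1, 0, 0, 0, 1, 1, 0, 0, 0, 0, 0, 0, 0, 1, 1, 1, 1, 1, 1, 0, 0, 0, 0, 0, 0, 3, 1, 1, 3], [0, 0, 0, 0, 0, 0, 1, 0,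 0, 0, 0, 0, 1, 1, 1, 1, 1, 0, 0, 0, 0, 0, 0, 0, 0, 0, 0, 0, 0, 0, 1, 1, 1, 1, 1, 3, 3, 3, 3, 1], [0, 0, 0, 0, 0, 0, 0, 1, 0, 0, 0, 0, 0, 0, 0, 0, 0, 1, 1, 1, 1, 1, 1, 1, 1, 1, 1, 1, 1, 1, 1, 1, 1, 1, 1, 1, 1, 1, 1, 3]]"
lemma chk_11: "chk G11 [0, 1, 7, 17] 15" by code_simp

definition G12 :: "nat list list" where "G12 = [[1, 0, 0, 0, 0, 0, 0, 0, 0, 0, 0, 0, 0, 1, 1, 0, 1, 1, 1, 0, 1, 0, 0, 0, 1, 1, 1, 1, 0, 1, 0, 0, 1, 0, 0, 0, 1, 0, 1, 1], [0, 1, 0, 0, 0, 0, 0, 0, 1, 0, 1, 1, 0, 1, 1, 1, 0, 0, 1, 1, 1, 0, 0, 1, 1, 0, 0, 0, 1, 0, 1, 1, 1, 1, 0, 1, 1, 0, 3, 2], [0, 0, 1, 0, 0, 0, 0, 0, 0, 1, 0, 0, 0, 0, 0, 1, 1, 0, 1, 0, 1, 0, 1, 1, 0, 0, 0, 1, 1, 0, 1, 1, 1, 0, 1, 1, 0, 2, 1, 2], [0, 0, 0, 1, 0, 0, 0, 0, 1, 1, 1, 0, 1, 1, 0, 0, 0, 1, 1, 0, 0, 1, 0, 1, 0, 1, 0, 1, 1, 0, 1, 0, 0, 0, 1, 0, 2, 2, 1, 0], [0, 0, 0, 0, 1, 0, 0, 0, 1, 1, 0, 1, 1, 1, 0, 0,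 0, 0, 0, 1, 1, 1, 0, 0, 1, 0, 1, 1, 1, 0, 0, 1, 0, 0, 1, 0, 2, 2, 0, 1], [0, 0, 0, 0, 0, 1, 0, 0, 0, 0, 1, 1, 1, 1, 0, 0, 0, 0, 0, 0, 0, 0, 1, 1, 1, 0, 0, 0, 0, 1, 1, 3, 0, 0, 0, 3, 1, 1, 3, 1], [0, 0, 0, 0, 0, 0, 1, 0, 0, 0, 0, 0, 0, 0, 1, 1, 1, 1, 1, 1, 1, 1, 1, 1, 1, 0, 0, 0, 0, 0, 0, 2, 1, 1, 3, 3, 1, 3, 1, 3], [0, 0, 0, 0, 0, 0, 0, 1, 0, 0, 0, 0, 0, 0, 0, 0, 0, 0, 0, 0, 0, 0, 0, 0, 0, 1, 1, 1, 1, 1, 1, 1, 1, 1, 1, 3, 1, 1, 3, 3]]"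
lemma chk_12: "chk G12 [0, 1, 6, 14] 16" by code_simp

definition G13 :: "nat list list" where "G13 = [[1, 0, 0, 0, 0, 0, 0, 0, 1, 0, 0, 1, 1, 1, 1, 1, 1, 1, 1, 0, 0, 1, 1, 1, 1, 1, 0, 0, 1, 0, 1, 0, 0, 1, 1, 0, 0, 1, 0, 2], [0, 1, 0, 0, 0, 0, 0, 0, 1, 0, 1, 0, 1, 1, 1, 0, 1, 0, 0, 1, 0, 0, 1, 1, 0, 1, 0, 1, 1, 1, 0, 1, 0, 1, 1, 1, 0, 1, 1, 2], [0, 0, 1, 0, 0, 0, 0, 0, 1, 1, 0, 1, 0, 1, 0, 1, 1, 1, 0, 1, 1, 0, 1, 0, 1, 1, 1, 0, 0, 1, 0, 0, 1, 1, 0, 1, 2, 0, 1, 1], [0, 0, 0, 1, 0, 0, 0, 0, 1, 1, 1, 1, 1, 0, 0, 0, 1, 1, 0, 1, 1, 1, 1, 1, 1, 0, 0, 0, 1, 1, 1, 1, 0, 1, 0, 0, 2, 0, 1, 0], [0, 0, 0, 0, 1, 0, 0, 0, 0, 0, 0, 1, 1, 1, 0, 0, 0, 1, 0, 0, 1, 0, 0, 1, 1, 1, 1, 0, 0, 0, 1, 1, 0, 1, 1, 0, 0, 0, 3, 1], [0, 0, 0, 0, 0, 1, 0, 0, 1, 1, 1, 1, 1, 1, 0, 0, 0, 0, 1, 1, 1, 0, 0, 0, 0, 0, 0, 1, 1, 1, 1, 3, 0, 0, 2, 3, 1, 1, 1, 3], [0, 0, 0, 0, 0, 0, 1, 0,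 0, 0, 0, 0, 0, 0, 1, 1, 1, 1, 1, 1, 1, 0, 0, 0, 0, 0, 0, 0, 0, 0, 0, 0, 1, 1, 1, 1, 1, 3, 1, 1], [0, 0, 0, 0, 0, 0, 0, 1, 0, 0, 0, 0, 0, 0, 0, 0, 0, 0, 0, 0, 2, 1, 1, 1, 1, 1, 1, 1, 1, 1, 1, 1, 1, 1, 1, 1, 3, 1, 3, 1]]"
lemma chk_13: "chk G13 [0, 1, 6, 14] 17" by code_simp

definition G14 :: "nat list list" where "G14 = [[1, 0, 0, 0, 0, 0, 0, 0, 0, 0, 1, 1, 0, 1, 0, 0, 1, 1, 1, 1, 0, 1, 1, 1, 1, 0, 1, 0, 1, 1, 1, 0, 0, 0, 1, 1, 0, 1, 1, 2], [0, 1, 0, 0, 0, 0, 0, 0, 1, 1, 1, 0, 1, 0, 0, 1, 1, 0, 0, 0, 1, 1, 0, 0, 1, 0, 1, 0, 0, 1, 1, 1, 1, 0, 1, 1, 1, 2, 3, 1], [0, 0, 1, 0, 0, 0, 0, 0, 1, 1, 0, 0, 1, 0, 1, 0, 1, 1, 1, 0, 0, 0, 0, 0, 1, 1, 0, 0, 1, 0, 0, 1, 0, 1, 0, 0, 1, 1, 0, 3], [0, 0, 0, 1, 0, 0, 0, 0, 1, 0, 0, 1, 0, 1, 1, 1, 1, 0, 1, 0, 0, 0, 1, 0, 0, 0, 1, 1, 1, 1, 1, 1, 0, 0, 1, 0, 0, 0, 2, 2], [0, 0, 0, 0, 1, 0, 0, 0, 0, 1, 0, 1, 0, 1, 1, 0,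 0, 1, 0, 0, 0, 1, 0, 1, 1, 1, 0, 0, 0, 1, 1, 1, 0, 0, 2, 1, 3, 1, 0, 2], [0, 0, 0, 0, 0, 1, 0, 0, 0, 0, 1, 0, 0, 1, 1, 0, 0, 1, 1, 1, 1, 1, 0, 0, 0, 0, 1, 1, 1, 2, 1, 1, 0, 2, 2, 0, 0, 2, 3, 1], [0, 0, 0, 0, 0, 0, 1, 0, 0, 0, 0, 0, 1, 1, 1, 1, 1, 1, 1, 1, 1, 0, 0, 0, 0, 0, 0, 0, 0, 2, 1, 1, 1, 1, 3, 1, 3, 3, 3, 1], [0, 0, 0, 0, 0, 0, 0, 1, 0, 0, 0, 0, 0, 0, 0, 0, 0, 0, 0, 0, 2, 1, 1, 1, 1, 1, 1, 1, 1, 1, 1, 1, 1, 3, 1, 1, 3, 3, 1, 1]]"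
lemma chk_14: "chk G14 [0, 1, 5, 10] 18" by code_simp

definition G15 :: "nat list list" where "G15 = [[1, 0, 0, 0, 0, 0, 0, 0, 0, 1, 0, 0, 1, 1, 0, 1, 1, 0, 1, 1, 1, 0, 1, 0, 0, 0, 0, 0, 0, 1, 0, 1, 0, 1, 1, 0, 0, 1, 0, 1], [0, 1, 0, 0, 0, 0, 0, 0, 1, 0, 0, 1, 0, 0, 1, 1, 1, 1, 0, 1, 0, 1, 0, 1, 0, 0, 0, 1, 0, 1, 1, 1, 0, 1, 2, 1, 1, 1, 1, 3], [0, 0, 1, 0, 0, 0, 0, 0, 1, 1, 1, 0, 1, 0, 0, 1, 0, 1, 1, 1, 1, 0, 0, 1, 1, 1, 0, 0, 1, 1, 1, 0, 1, 1, 0, 2, 1, 0, 1, 0], [0, 0, 0, 1, 0, 0, 0, 0, 0, 0, 1, 1, 1, 0, 0, 0, 0, 0, 0, 1, 1, 0, 0, 1, 1, 1, 1, 0, 0, 0, 1, 1, 1, 1, 0, 1, 0, 0, 0, 3], [0, 0, 0, 0, 1, 0, 0, 0, 0, 0, 0, 0, 1, 1, 1, 1, 0, 0, 0, 0, 1, 1, 0, 0, 1, 0, 1, 1, 1, 0, 0, 0, 1, 1, 0, 3, 1, 2, 2, 1], [0, 0, 0, 0, 0, 1, 0, 0, 1, 1, 1, 1, 1, 1, 1, 1, 0, 0, 0, 0, 0, 0, 1, 1, 1, 0, 0, 0, 0, 1, 1, 1, 1, 3, 0, 2, 0, 1, 3, 1], [0, 0, 0, 0, 0, 0, 1, 0,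 0, 0, 0, 0, 0, 0, 0, 0, 1, 1, 1, 1, 1, 1, 1, 1, 1, 0, 0, 0, 0, 0, 0, 0, 0, 0, 1, 1, 1, 1, 3, 1], [0, 0, 0, 0, 0, 0, 0, 1, 0, 0, 0, 0, 0, 0, 0, 0, 0, 0, 0, 0, 0, 0, 0, 0, 0, 1, 1, 1, 1, 1, 1, 1, 1, 1, 3, 1, 1, 3, 3, 3]]"
lemma chk_15: "chk G15 [0, 1, 6, 16] 19" by code_simp

definition G16 :: "nat list list" where "G16 = [[1, 0, 0, 0, 0, 0, 0, 0, 0, 0, 0, 0, 0, 1, 1, 0, 1, 1, 0, 1, 0, 1, 0, 0, 1, 1, 1, 0, 1, 1, 0, 0, 1, 0, 1, 0, 0, 1, 0, 1], [0, 1, 0, 0, 0, 0, 0, 0, 1, 0, 1, 1, 1, 0, 1, 1, 0, 1, 0, 0, 1, 1, 1, 0, 1, 0, 1, 0, 0, 1, 0, 1, 1, 1, 0, 1, 1, 1, 2, 0], [0, 0, 1, 0, 0, 0, 0, 0, 1, 0, 1, 0, 0, 0, 0, 1, 1, 0, 0, 1, 0, 1, 0, 1, 0, 0, 1, 1, 0, 1, 1, 1, 1, 0, 0, 1, 1, 2, 2, 0], [0, 0, 0, 1, 0, 0, 0, 0, 0, 1, 1, 1, 0, 0, 0, 0, 0, 1, 1, 1, 1, 1, 0, 0, 1, 1, 0, 0, 0, 1, 1, 1, 0, 0, 1, 0, 2, 2, 0, 3], [0, 0, 0, 0, 1, 0, 0, 0, 1, 1, 1, 0, 1, 1, 0, 0,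 0, 1, 1, 1, 0, 0, 1, 0, 0, 0, 1, 1, 0, 1, 1, 0, 0, 2, 1, 1, 0, 2, 0, 0], [0, 0, 0, 0, 0, 1, 0, 0, 0, 1, 1, 1, 1, 1, 0, 0, 0, 0, 0, 0, 0, 0, 0, 1, 1, 0, 0, 0, 1, 1, 1, 1, 0, 0, 0, 0, 3, 1, 1, 3], [0, 0, 0, 0, 0, 0, 1, 0, 0, 0, 0, 0, 0, 0, 1, 1, 1, 1, 1, 1, 1, 1, 1, 1, 1, 0, 0, 0, 0, 0, 0, 2, 1, 1, 1, 3, 1, 3, 3, 1], [0, 0, 0, 0, 0, 0, 0, 1, 0, 0, 0, 0, 0, 0, 0, 0, 0, 0, 0, 0, 0, 0, 0, 0, 0, 1, 1, 1, 1, 1, 1, 1, 1, 3, 1, 3, 3, 1, 3, 1]]"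
lemma chk_16: "chk G16 [0, 1, 6, 14] 20" by code_simp

definition G17 :: "nat list list" where "G17 = [[1, 0, 0, 0, 0, 0, 0, 0, 1, 1, 1, 0, 0, 1, 0, 0, 0, 1, 1, 1, 0, 1, 0, 1, 0, 1, 1, 0, 1, 1, 1, 0, 1, 0, 0, 1, 1, 1, 2, 1], [0, 1, 0, 0, 0, 0, 0, 0, 1, 1, 1, 1, 0, 1, 1, 0, 1, 0, 0, 1, 1, 0, 0, 1, 0, 1, 1, 1, 1, 0, 0, 1, 1, 1, 0, 1, 0, 1, 2, 0], [0, 0, 1, 0, 0, 0, 0, 0, 1, 0, 0, 0, 1, 1, 1, 0, 0, 0, 0, 0, 1, 1, 0, 1, 1, 1, 1, 0, 1, 0, 1, 1, 1, 0, 0, 0, 1, 2, 2, 0], [0, 0, 0, 1, 0, 0, 0, 0, 0, 1, 0, 1, 1, 1, 0, 0, 1, 0, 0, 1, 1, 0, 0, 1, 1, 1, 0, 0, 0, 0, 1, 1, 0, 0, 1, 1, 0, 2, 2, 3], [0, 0, 0, 0, 1, 0, 0, 0, 0, 0, 0, 0, 1, 1, 0, 1, 1, 1, 0, 0, 0, 1, 1, 1, 0, 0, 1, 1, 0, 0, 0, 0, 0, 1, 1, 1, 1, 1, 0, 0], [0, 0, 0, 0, 0, 1, 0, 0, 0, 0, 1, 1, 0, 0, 0, 1, 1, 0, 1, 1, 1, 1, 1, 1, 0, 0, 0, 0, 1, 1, 1, 1, 0, 1, 1, 3, 0, 2, 1, 1], [0, 0, 0, 0, 0, 0, 1, 0,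 0, 0, 0, 0, 0, 0, 1, 1, 1, 1, 1, 1, 1, 0, 0, 0, 0, 0, 0, 0, 0, 0, 0, 0, 1, 1, 3, 3, 1, 1, 3, 1], [0, 0, 0, 0, 0, 0, 0, 1, 0, 0, 0, 0, 0, 0, 0, 0, 0, 0, 0, 0, 2, 1, 1, 1, 1, 1, 1, 1, 1, 1, 1, 1, 1, 1, 1, 1, 1, 3, 3, 1]]"
lemma chk_17: "chk G17 [0, 1, 2, 8] 21" by code_simp

definition G18 :: "nat list list" where "G18 = [[1, 0, 0, 0, 0, 0, 0, 0, 1, 1, 0, 1, 1, 0, 1, 1, 1, 1, 0, 1, 1, 1, 0, 1, 1, 1, 0, 1, 1, 1, 0, 1, 1, 1, 1, 0, 1, 0, 1, 0], [0, 1, 0, 0, 0, 0, 0, 0, 1, 0, 1, 1, 0, 0, 1, 0, 1, 0, 1, 0, 1, 0, 0, 1, 1, 1, 1, 0, 1, 0, 1, 0, 1, 1, 0, 1, 3, 1, 2, 1], [0, 0, 1, 0, 0, 0, 0, 0, 0, 0, 0, 1, 1, 1, 1, 0, 0, 1, 1, 1, 1, 0, 1, 0, 0, 1, 1, 1, 0, 1, 1, 1, 1, 0, 0, 1, 0, 2, 1, 3], [0, 0, 0, 1, 0, 0, 0, 0, 0, 1, 1, 1, 0, 1, 1, 0, 1, 1, 0, 0, 1, 0, 0, 1, 0, 1, 1, 1, 1, 1, 1, 0, 0, 1, 1, 0, 0, 2, 3, 1], [0, 0, 0, 0, 1, 0, 0, 0, 1, 1, 1, 1, 0, 0, 0, 1,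 1, 1, 0, 0, 0, 1, 1, 1, 1, 0, 1, 1, 1, 0, 0, 1, 0, 0, 1, 0, 2, 3, 1, 1], [0, 0, 0, 0, 0, 1, 0, 0, 0, 0, 0, 0, 1, 1, 1, 1, 1, 1, 0, 0, 0, 0, 0, 0, 1, 0, 0, 0, 0, 1, 1, 1, 0, 0, 0, 3, 1, 1, 3, 3], [0, 0, 0, 0, 0, 0, 1, 0, 0, 0, 0, 0, 0, 0, 0, 0, 0, 0, 1, 1, 1, 1, 1, 1, 1, 0, 0, 0, 0, 0, 0, 0, 1, 1, 3, 1, 3, 3, 3, 3], [0, 0, 0, 0, 0, 0, 0, 1, 0, 0, 0, 0, 0, 0, 0, 0, 0, 0, 0, 0, 0, 0, 0, 0, 0, 1, 1, 1, 1, 1, 1, 1, 1, 1, 1, 1, 3, 3, 1, 3]]"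
lemma chk_18: "chk G18 [0, 1, 4, 8] 22" by code_simp

definition G19 :: "nat list list" where "G19 = [[1, 0, 0, 0, 0, 0, 0, 0, 0, 1, 0, 1, 0, 0, 0, 0, 1, 1, 0, 0, 0, 1, 0, 1, 1, 0, 1, 0, 1, 1, 0, 1, 0, 1, 1, 0, 1, 1, 0, 0], [0, 1, 0, 0, 0, 0, 0, 0, 1, 1, 1, 0, 1, 0, 1, 0, 1, 0, 0, 1, 0, 0, 0, 0, 0, 1, 0, 0, 1, 1, 0, 0, 1, 0, 1, 0, 3, 0, 1, 1], [0, 0, 1, 0, 0, 0, 0, 0, 1, 1, 0, 1, 0, 1, 1, 0, 0, 0, 1, 0, 0, 0, 0, 1, 0, 0, 1, 0, 1, 0, 0, 1, 1, 0, 1, 0, 0, 1, 1, 1], [0, 0, 0, 1, 0, 0, 0, 0, 1, 1, 1, 0, 1, 1, 1, 1, 0, 1, 0, 0, 1, 0, 1, 0, 1, 1, 1, 1, 0, 1, 1, 0, 0, 1, 0, 1, 0, 2, 0, 1], [0, 0, 0, 0, 1, 0, 0, 0, 0, 1, 1, 0, 0, 0, 1, 1, 0, 0, 1, 1, 1, 0, 0, 1, 1, 0, 1, 1, 0, 0, 0, 1, 1, 1, 0, 0, 2, 0, 2, 3], [0, 0, 0, 0, 0, 1, 0, 0, 0, 0, 0, 1, 1, 1, 1, 1, 0, 0, 0, 0, 0, 1, 1, 1, 1, 0, 0, 0, 1, 1, 1, 1, 1, 3, 0, 2, 1, 1, 3, 1], [0, 0, 0, 0, 0, 0, 1, 0,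 0, 0, 0, 0, 0, 0, 0, 0, 1, 1, 1, 1, 1, 1, 1, 1, 1, 0, 0, 0, 0, 0, 0, 0, 0, 0, 3, 1, 1, 3, 3, 1], [0, 0, 0, 0, 0, 0, 0, 1, 0, 0, 0, 0, 0, 0, 0, 0, 0, 0, 0, 0, 0, 0, 0, 0, 0, 1, 1, 1, 1, 1, 1, 1, 1, 1, 3, 3, 3, 1, 3, 1]]"
lemma chk_19: "chk G19 [0, 1, 6, 16] 23" by code_simp

definition G20 :: "nat list list" where "G20 = [[1, 0, 0, 0, 0, 0, 0, 0, 1, 0, 1, 1, 0, 1, 1, 1, 0, 0, 1, 0, 0, 0, 0, 0, 0, 1, 1, 1, 0, 0, 0, 0, 0, 1, 1, 1, 0, 1, 1, 0], [0, 1, 0, 0, 0, 0, 0, 0, 0, 1, 0, 0, 1, 0, 1, 1, 1, 0, 0, 0, 0, 0, 0, 1, 1, 1, 0, 0, 0, 1, 0, 1, 1, 1, 0, 1, 0, 3, 0, 1], [0, 0, 1, 0, 0, 0, 0, 0, 0, 1, 1, 1, 0, 0, 0, 1, 0, 1, 1, 0, 1, 1, 0, 1, 1, 1, 0, 0, 1, 0, 0, 1, 1, 0, 2, 1, 1, 1, 3, 1], [0, 0, 0, 1, 0, 0, 0, 0, 1, 0, 0, 1, 0, 0, 0, 1, 1, 0, 1, 1, 1, 1, 1, 1, 1, 0, 0, 1, 0, 0, 1, 1, 0, 0, 1, 1, 3, 3, 2, 1], [0, 0, 0, 0, 1, 0, 0, 0, 1, 0, 0, 1, 1, 1, 0, 0,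 0, 1, 1, 0, 1, 0, 1, 1, 0, 0, 0, 1, 0, 0, 0, 0, 1, 1, 1, 1, 0, 0, 0, 3], [0, 0, 0, 0, 0, 1, 0, 0, 0, 1, 1, 1, 1, 1, 0, 0, 0, 0, 0, 1, 1, 0, 0, 0, 1, 1, 1, 3, 0, 0, 0, 0, 0, 0, 0, 0, 1, 3, 1, 3], [0, 0, 0, 0, 0, 0, 1, 0, 0, 0, 0, 0, 0, 0, 1, 1, 1, 1, 1, 1, 1, 0, 0, 0, 0, 0, 0, 2, 1, 1, 1, 1, 1, 1, 3, 1, 3, 3, 3, 3], [0, 0, 0, 0, 0, 0, 0, 1, 0, 0, 0, 0, 0, 0, 0, 0, 0, 0, 0, 0, 2, 1, 1, 1, 1, 1, 1, 1, 1, 1, 1, 1, 1, 1, 1, 3, 1, 1, 3, 3]]"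
lemma chk_20: "chk G20 [0, 1, 6, 14] 24" by code_simp

definition G21 :: "nat list list" where "G21 = [[1, 0, 0, 0, 0, 0, 0, 0, 1, 0, 1, 1, 1, 0, 0, 1, 1, 0, 0, 0, 0, 0, 0, 1, 0, 1, 1, 0, 0, 1, 0, 1, 1, 1, 0, 0, 1, 1, 0, 0], [0, 1, 0, 0, 0, 0, 0, 0, 1, 1, 1, 0, 1, 0, 1, 0, 1, 1, 0, 1, 1, 1, 1, 1, 1, 0, 1, 1, 0, 1, 1, 0, 1, 1, 1, 1, 1, 2, 1, 2], [0, 0, 1, 0, 0, 0, 0, 0, 1, 1, 0, 1, 0, 1, 0, 0, 0, 1, 0, 1, 0, 0, 0, 0, 1, 1, 1, 0, 1, 1, 0, 0, 1, 0, 0, 0, 1, 1, 1, 0], [0, 0, 0, 1, 0, 0, 0, 0, 0, 1, 0, 0, 0, 0, 1, 1, 0, 0, 1, 1, 1, 0, 1, 0, 0, 0, 0, 1, 1, 0, 1, 1, 1, 1, 1, 0, 0, 0, 0, 1], [0, 0, 0, 0, 1, 0, 0, 0, 0, 0, 1, 1, 0, 1, 0, 0, 0, 0, 1, 1, 0, 1, 1, 1, 1, 0, 1, 0, 0, 0, 1, 1, 1, 0, 1, 2, 2, 0, 0, 1], [0, 0, 0, 0, 0, 1, 0, 0, 0, 0, 0, 0, 1, 1, 1, 1, 0, 0, 0, 0, 0, 0, 1, 1, 1, 0, 0, 0, 0, 1, 1, 1, 1, 1, 0, 0, 0, 1, 3, 1], [0, 0, 0, 0, 0, 0, 1, 0,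 0, 0, 0, 0, 0, 0, 0, 0, 1, 1, 1, 1, 1, 1, 1, 1, 1, 0, 0, 0, 0, 0, 0, 0, 2, 2, 1, 3, 3, 3, 1, 3], [0, 0, 0, 0, 0, 0, 0, 1, 0, 0, 0, 0, 0, 0, 0, 0, 0, 0, 0, 0, 0, 0, 0, 0, 0, 1, 1, 1, 1, 1, 1, 1, 1, 3, 1, 1, 3, 1, 3, 3]]"
lemma chk_21: "chk G21 [0, 1, 2, 8] 25" by code_simp

definition G22 :: "nat list list" where "G22 = [[1, 0, 0, 0, 0, 0, 0, 0, 1, 1, 1, 1, 1, 0, 1, 0, 1, 0, 1, 1, 1, 1, 1, 1, 0, 0, 0, 0, 0, 0, 0, 1, 1, 1, 0, 1, 1, 0, 1, 2], [0, 1, 0, 0, 0, 0, 0, 0, 1, 1, 0, 1, 1, 0, 0, 1, 1, 1, 1, 0, 0, 1, 0, 1, 1, 0, 1, 0, 1, 1, 0, 1, 0, 0, 0, 1, 1, 2, 3, 1], [0, 0, 1, 0, 0, 0, 0, 0, 1, 0, 1, 0, 0, 1, 0, 0, 0, 1, 0, 1, 0, 1, 0, 0, 1, 0, 0, 1, 0, 0, 1, 1, 0, 1, 1, 1, 1, 2, 2, 3], [0, 0, 0, 1, 0, 0, 0, 0, 0, 1, 1, 0, 0, 0, 1, 1, 0, 0, 1, 1, 1, 1, 1, 0, 0, 1, 1, 0, 0, 1, 0, 0, 0, 0, 0, 2, 1, 1, 1, 2], [0, 0, 0, 0, 1, 0, 0, 0, 0, 0, 0, 1, 0, 1, 0, 0,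 0, 0, 1, 1, 0, 0, 1, 1, 1, 1, 0, 1, 1, 1, 0, 0, 0, 1, 0, 0, 3, 1, 3, 0], [0, 0, 0, 0, 0, 1, 0, 0, 0, 0, 0, 0, 1, 1, 1, 1, 0, 0, 0, 0, 0, 0, 1, 1, 1, 0, 0, 0, 0, 1, 1, 1, 3, 3, 0, 0, 0, 3, 3, 3], [0, 0, 0, 0, 0, 0, 1, 0, 0, 0, 0, 0, 0, 0, 0, 0, 1, 1, 1, 1, 1, 1, 1, 1, 1, 0, 0, 0, 0, 0, 0, 0, 0, 0, 1, 3, 3, 3, 1, 3], [0, 0, 0, 0, 0, 0, 0, 1, 0, 0, 0, 0, 0, 0, 0, 0, 0, 0, 0, 0, 0, 0, 0, 0, 0, 1, 1, 1, 1, 1, 1, 1, 1, 3, 1, 3, 1, 3, 1, 3]]"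
lemma chk_22: "chk G22 [0, 1, 2, 8] 26" by code_simp

definition G23 :: "nat list list" where "G23 = [[1, 0, 0, 0, 0, 0, 0, 0, 1, 1, 1, 0, 0, 1, 1, 1, 0, 1, 0, 0, 0, 1, 0, 1, 0, 1, 0, 1, 1, 1, 0, 0, 0, 1, 0, 0, 0, 0, 0, 1], [0, 1, 0, 0, 0, 0, 0, 0, 1, 1, 0, 1, 1, 0, 0, 1, 0, 0, 0, 1, 1, 0, 0, 0, 0, 1, 0, 1, 1, 1, 1, 0, 1, 0, 0, 0, 0, 1, 0, 1], [0, 0, 1, 0, 0, 0, 0, 0, 1, 0, 0, 1, 1, 1, 0, 1, 1, 0, 0, 0, 1, 1, 0, 0, 1, 0, 1, 1, 1, 0, 1, 0, 0, 0, 1, 0, 1, 2, 0, 2], [0, 0, 0, 1, 0, 0, 0, 0, 0, 0, 1, 0, 0, 0, 1, 1, 1, 0, 1, 1, 0, 0, 1, 0, 0, 1, 1, 1, 0, 1, 1, 1, 0, 0, 1, 0, 2, 0, 1, 2], [0, 0, 0, 0, 1, 0, 0, 0, 0, 1, 1, 0, 0, 0, 0, 0, 0, 1, 1, 1, 1, 1, 0, 0, 0, 1, 1, 1, 0, 0, 0, 0, 2, 0, 1, 1, 1, 3, 3, 2], [0, 0, 0, 0, 0, 1, 0, 0, 0, 0, 0, 1, 0, 0, 0, 0, 0, 0, 0, 1, 1, 1, 1, 1, 1, 0, 1, 1, 1, 3, 0, 0, 0, 0, 0, 0, 1, 3, 1, 1], [0, 0, 0, 0, 0, 0, 1, 0,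 0, 0, 0, 0, 1, 1, 1, 1, 1, 1, 1, 1, 1, 1, 1, 1, 1, 0, 0, 0, 0, 0, 1, 1, 1, 1, 1, 3, 3, 1, 3, 1], [0, 0, 0, 0, 0, 0, 0, 1, 0, 0, 0, 0, 0, 0, 0, 0, 0, 0, 0, 0, 0, 0, 0, 0, 0, 1, 1, 1, 1, 1, 1, 1, 3, 1, 1, 3, 3, 1, 1, 3]]"
lemma chk_23: "chk G23 [0, 1, 2, 8] 27" by code_simp

definition G24 :: "nat list list" where "G24 = [[1, 0, 0, 0, 0, 0, 0, 0, 0, 1, 0, 0, 1, 1, 1, 1, 1, 1, 0, 0, 0, 0, 0, 0, 0, 1, 1, 1, 0, 0, 1, 0, 1, 0, 0, 0, 1, 1, 0, 1], [0, 1, 0, 0, 0, 0, 0, 0, 1, 0, 1, 0, 0, 1, 1, 0, 1, 0, 0, 1, 1, 1, 1, 1, 0, 1, 1, 1, 0, 1, 0, 1, 1, 0, 0, 1, 3, 0, 1, 2], [0, 0, 1, 0, 0, 0, 0, 0, 1, 1, 0, 1, 0, 1, 0, 0, 0, 0, 0, 0, 1, 0, 1, 0, 1, 1, 1, 0, 0, 0, 0, 1, 1, 0, 1, 1, 0, 3, 3, 0], [0, 0, 0, 1, 0, 0, 0, 0, 1, 0, 1, 1, 0, 0, 0, 1, 1, 0, 1, 1, 0, 1, 1, 0, 0, 0, 0, 1, 1, 1, 1, 0, 0, 1, 1, 0, 0, 0, 0, 0], [0, 0, 0, 0, 1, 0, 0, 0, 0, 0, 0, 0, 1, 1, 0, 0,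 1, 0, 0, 1, 1, 0, 1, 1, 1, 1, 0, 0, 0, 1, 1, 1, 0, 0, 3, 1, 2, 0, 2, 1], [0, 0, 0, 0, 0, 1, 0, 0, 0, 1, 1, 1, 1, 1, 0, 0, 0, 1, 1, 1, 1, 0, 0, 0, 0, 0, 1, 1, 1, 1, 1, 3, 0, 0, 0, 2, 1, 3, 3, 1], [0, 0, 0, 0, 0, 0, 1, 0, 0, 0, 0, 0, 0, 0, 1, 1, 1, 1, 1, 1, 1, 0, 0, 0, 0, 0, 0, 0, 0, 0, 0, 0, 1, 1, 3, 3, 1, 1, 3, 1], [0, 0, 0, 0, 0, 0, 0, 1, 0, 0, 0, 0, 0, 0, 0, 0, 0, 0, 0, 0, 2, 1, 1, 1, 1, 1, 1, 1, 1, 1, 1, 1, 1, 1, 1, 1, 3, 1, 1, 3]]"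
lemma chk_24: "chk G24 [0, 1, 6, 14] 28" by code_simp

definition G25 :: "nat list list" where "G25 = [[1, 0, 0, 0, 0, 0, 0, 0, 1, 0, 0, 1, 1, 1, 1, 1, 1, 1, 1, 0, 0, 1, 0, 0, 0, 1, 0, 1, 0, 1, 0, 1, 1, 0, 0, 1, 1, 2, 1, 1], [0, 1, 0, 0, 0, 0, 0, 0, 0, 0, 1, 0, 0, 1, 1, 0, 1, 0, 0, 1, 0, 0, 0, 0, 1, 0, 0, 1, 1, 1, 0, 1, 0, 1, 1, 1, 0, 1, 3, 0], [0, 0, 1, 0, 0, 0, 0, 0, 1, 1, 0, 1, 0, 1, 0, 1, 1, 1, 0, 1, 1, 1, 1, 0, 0, 0, 1, 1, 1, 0, 1, 1, 0, 0, 1, 0, 3, 1, 0, 2], [0, 0, 0, 1, 0, 0, 0, 0, 0, 1, 1, 1, 0, 0, 0, 0, 1, 1, 0, 1, 1, 0, 1, 1, 0, 0, 0, 0, 1, 1, 1, 1, 0, 1, 0, 0, 0, 2, 1, 2], [0, 0, 0, 0, 1, 0, 0, 0, 0, 0, 0, 1, 1, 1, 0, 0, 0, 1, 0, 0, 1, 0, 0, 1, 1, 1, 1, 0, 0, 0, 1, 1, 0, 1, 1, 2, 2, 0, 3, 3], [0, 0, 0, 0, 0, 1, 0, 0, 1, 1, 1, 1, 1, 1, 0, 0, 0, 0, 1, 1, 1, 0, 0, 0, 0, 0, 0, 1, 1, 1, 1, 3, 0, 0, 2, 1, 1, 1, 1, 1], [0, 0, 0, 0, 0, 0, 1, 0,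 0, 0, 0, 0, 0, 0, 1, 1, 1, 1, 1, 1, 1, 0, 0, 0, 0, 0, 0, 0, 0, 0, 0, 0, 1, 1, 3, 1, 1, 3, 3, 3], [0, 0, 0, 0, 0, 0, 0, 1, 0, 0, 0, 0, 0, 0, 0, 0, 0, 0, 0, 0, 2, 1, 1, 1, 1, 1, 1, 1, 1, 1, 1, 1, 1, 1, 3, 1, 3, 1, 3, 1]]"
lemma chk_25: "chk G25 [0, 1, 6, 14] 29" by code_simp

definition G26 :: "nat list list" where "G26 = [[1, 0, 0, 0, 0, 0, 0, 0, 0, 0, 1, 0, 0, 1, 1, 0, 1, 1, 0, 1, 1, 1, 0, 1, 1, 1, 1, 0, 1, 0, 1, 1, 0, 1, 0, 0, 1, 2, 1, 1], [0, 1, 0, 0, 0, 0, 0, 0, 1, 1, 0, 1, 1, 0, 1, 0, 0, 1, 1, 1, 1, 1, 0, 0, 0, 1, 0, 1, 1, 1, 1, 0, 1, 1, 1, 0, 1, 0, 0, 2], [0, 0, 1, 0, 0, 0, 0, 0, 0, 1, 1, 1, 0, 0, 0, 1, 0, 1, 1, 0, 1, 1, 0, 1, 1, 1, 0, 0, 1, 0, 0, 1, 1, 0, 2, 1, 3, 1, 1, 1], [0, 0, 0, 1, 0, 0, 0, 0, 1, 0, 0, 1, 0, 0, 0, 1, 1, 0, 1, 1, 1, 1, 1, 1, 1, 0, 0, 1, 0, 0, 1, 1, 0, 0, 1, 1, 1, 1, 2, 3], [0, 0, 0, 0, 1, 0, 0, 0, 1, 0, 0, 1, 1, 1, 0, 0,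 0, 1, 1, 0, 1, 0, 1, 1, 0, 0, 0, 1, 0, 0, 0, 0, 1, 1, 1, 3, 0, 2, 2, 1], [0, 0, 0, 0, 0, 1, 0, 0, 0, 1, 1, 1, 1, 1, 0, 0, 0, 0, 0, 1, 1, 0, 0, 0, 1, 1, 1, 1, 0, 0, 0, 0, 0, 0, 0, 0, 3, 1, 1, 3], [0, 0, 0, 0, 0, 0, 1, 0, 0, 0, 0, 0, 0, 0, 1, 1, 1, 1, 1, 1, 1, 0, 0, 0, 0, 0, 0, 2, 1, 1, 1, 1, 1, 1, 1, 1, 1, 3, 3, 1], [0, 0, 0, 0, 0, 0, 0, 1, 0, 0, 0, 0, 0, 0, 0, 0, 0, 0, 0, 0, 2, 1, 1, 1, 1, 1, 1, 1, 1, 1, 1, 1, 1, 1, 3, 1, 1, 3, 3, 3]]"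
lemma chk_26: "chk G26 [0, 1, 6, 14] 30" by code_simp

definition G27 :: "nat list list" where "G27 = [[1, 0, 0, 0, 0, 0, 0, 0, 1, 1, 1, 0, 1, 0, 0, 1, 1, 0, 1, 1, 1, 0, 1, 1, 0, 1, 0, 0, 1, 0, 1, 0, 1, 1, 0, 0, 1, 1, 1, 2], [0, 1, 0, 0, 0, 0, 0, 0, 1, 1, 0, 1, 0, 1, 0, 0, 0, 1, 0, 1, 1, 0, 0, 1, 0, 1, 1, 1, 0, 1, 0, 0, 1, 0, 0, 0, 0, 0, 3, 1], [0, 0, 1, 0, 0, 0, 0, 0, 1, 0, 1, 1, 0, 0, 1, 0, 1, 0, 0, 0, 0, 0, 1, 1, 1, 1, 0, 1, 1, 1, 0, 0, 0, 1, 0, 2, 1, 1, 2, 0], [0, 0, 0, 1, 0, 0, 0, 0, 0, 1, 1, 0, 1, 1, 1, 1, 0, 1, 0, 1, 1, 0, 0, 1, 1, 0, 0, 1, 1, 1, 0, 1, 1, 1, 1, 2, 0, 0, 0, 3], [0, 0, 0, 0, 1, 0, 0, 0, 0, 0, 0, 0, 0, 0, 1, 1, 1, 0, 1, 0, 1, 1, 1, 0, 0, 1, 0, 0, 1, 1, 0, 1, 1, 1, 2, 1, 1, 2, 0, 0], [0, 0, 0, 0, 0, 1, 0, 0, 0, 0, 0, 1, 1, 1, 0, 0, 1, 0, 0, 1, 0, 1, 1, 0, 0, 0, 1, 1, 0, 2, 0, 1, 1, 1, 0, 0, 2, 1, 1, 1], [0, 0, 0, 0, 0, 0, 1, 0,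 0, 0, 0, 0, 0, 0, 0, 0, 1, 1, 1, 1, 1, 0, 0, 0, 0, 0, 0, 0, 0, 0, 1, 1, 1, 1, 1, 3, 3, 3, 1, 1], [0, 0, 0, 0, 0, 0, 0, 1, 0, 0, 0, 0, 0, 0, 0, 0, 0, 0, 0, 0, 2, 1, 1, 1, 1, 1, 1, 1, 1, 1, 1, 1, 1, 1, 1, 1, 1, 3, 1, 1]]"
lemma chk_27: "chk G27 [0, 1, 2, 8] 31" by code_simp

definition G28 :: "nat list list" where "G28 = [[1, 0, 0, 0, 0, 0, 0, 0, 1, 1, 0, 1, 0, 1, 1, 0, 0, 0, 1, 1, 0, 1, 0, 1, 0, 1, 0, 1, 1, 0, 1, 0, 1, 1, 0, 1, 1, 1, 1, 2], [0, 1, 0, 0, 0, 0, 0, 0, 1, 0, 0, 1, 1, 1, 0, 1, 1, 0, 1, 0, 0, 1, 1, 1, 1, 0, 1, 1, 0, 1, 0, 0, 1, 0, 1, 0, 1, 3, 2, 1], [0, 0, 1, 0, 0, 0, 0, 0, 0, 1, 0, 0, 1, 1, 0, 0, 1, 0, 1, 0, 1, 1, 1, 0, 1, 1, 0, 1, 0, 0, 0, 1, 1, 0, 0, 0, 0, 0, 3, 1], [0, 0, 0, 1, 0, 0, 0, 0, 1, 1, 1, 1, 1, 1, 0, 0, 1, 1, 1, 1, 0, 1, 1, 1, 0, 1, 1, 0, 0, 0, 0, 1, 1, 1, 0, 2, 1, 2, 0, 2], [0, 0, 0, 0, 1, 0, 0, 0, 0, 0, 1, 1, 1, 0, 1, 1,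 1, 1, 0, 0, 0, 1, 0, 0, 1, 1, 0, 1, 1, 0, 0, 1, 1, 1, 0, 0, 2, 2, 0, 0], [0, 0, 0, 0, 0, 1, 0, 0, 0, 0, 1, 1, 1, 1, 1, 1, 0, 0, 0, 0, 1, 1, 1, 1, 1, 0, 0, 0, 0, 1, 1, 1, 1, 1, 0, 0, 2, 1, 3, 3], [0, 0, 0, 0, 0, 0, 1, 0, 0, 0, 0, 0, 0, 0, 0, 0, 1, 1, 1, 1, 1, 1, 1, 1, 1, 0, 0, 0, 0, 0, 0, 0, 0, 0, 1, 3, 3, 1, 3, 1], [0, 0, 0, 0, 0, 0, 0, 1, 0, 0, 0, 0, 0, 0, 0, 0, 0, 0, 0, 0, 0, 0, 0, 0, 0, 1, 1, 1, 1, 1, 1, 1, 1, 3, 1, 3, 3, 1, 3, 3]]"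
lemma chk_28: "chk G28 [0, 1, 3, 8] 32" by code_simp

definition G29 :: "nat list list" where "G29 = [[1, 0, 0, 0, 0, 0, 0, 0, 1, 1, 1, 1, 1, 0, 1, 1, 1, 1, 0, 1, 0, 1, 0, 1, 1, 0, 0, 1, 0, 1, 0, 1, 0, 1, 0, 1, 0, 1, 0, 2], [0, 1, 0, 0, 0, 0, 0, 0, 1, 1, 1, 0, 1, 0, 0, 1, 1, 0, 1, 0, 0, 1, 0, 0, 1, 1, 1, 1, 1, 1, 1, 0, 0, 0, 1, 1, 0, 3, 2, 1], [0, 0, 1, 0, 0, 0, 0, 0, 0, 0, 0, 1, 1, 1, 0, 1, 0, 1, 1, 1, 0, 0, 1, 0, 1, 1, 0, 1, 0, 1, 0, 0, 1, 1, 0, 1, 0, 2, 0, 2], [0, 0, 0, 1, 0, 0, 0, 0, 1, 0, 1, 1, 1, 1, 0, 0, 0, 0, 1, 1, 1, 1, 0, 0, 0, 0, 1, 1, 0, 0, 0, 0, 1, 1, 0, 2, 2, 0, 1, 1], [0, 0, 0, 0, 1, 0, 0, 0, 0, 1, 1, 1, 0, 0, 1, 1, 0, 0, 1, 1, 1, 1, 1, 1, 0, 0, 0, 0, 1, 0, 0, 0, 1, 0, 0, 2, 1, 2, 3, 0], [0, 0, 0, 0, 0, 1, 0, 0, 0, 0, 1, 1, 1, 1, 1, 1, 0, 0, 0, 0, 0, 0, 0, 0, 1, 0, 0, 0, 0, 1, 1, 1, 1, 3, 0, 2, 2, 1, 1, 3], [0, 0, 0, 0, 0, 0, 1, 0,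 0, 0, 0, 0, 0, 0, 0, 0, 1, 1, 1, 1, 1, 1, 1, 1, 1, 0, 0, 0, 0, 0, 0, 0, 0, 0, 1, 3, 3, 1, 1, 3], [0, 0, 0, 0, 0, 0, 0, 1, 0, 0, 0, 0, 0, 0, 0, 0, 0, 0, 0, 0, 0, 0, 0, 0, 0, 1, 1, 1, 1, 1, 1, 1, 1, 1, 1, 3, 3, 3, 1, 3]]"
lemma chk_29: "chk G29 [0, 1, 3, 8] 33" by code_simp

definition G30 :: "nat list list" where "G30 = [[1, 0, 0, 0, 0, 0, 0, 0, 1, 1, 1, 0, 0, 1, 1, 0, 1, 1, 0, 0, 0, 0, 1, 0, 0, 1, 0, 0, 0, 0, 1, 0, 0, 1, 0, 1, 1, 0, 1, 1], [0, 1, 0, 0, 0, 0, 0, 0, 1, 1, 0, 1, 0, 0, 0, 1, 0, 0, 0, 0, 1, 0, 1, 0, 1, 0, 1, 1, 0, 1, 0, 1, 0, 0, 0, 1, 1, 1, 3, 0], [0, 0, 1, 0, 0, 0, 0, 0, 0, 0, 1, 1, 1, 0, 0, 0, 1, 1, 0, 0, 0, 0, 1, 1, 0, 0, 0, 0, 1, 1, 1, 1, 0, 0, 1, 1, 3, 0, 0, 3], [0, 0, 0, 1, 0, 0, 0, 0, 0, 0, 1, 1, 1, 1, 0, 1, 0, 0, 0, 1, 1, 1, 1, 0, 0, 1, 1, 0, 1, 1, 1, 1, 1, 0, 1, 0, 0, 3, 2, 1], [0, 0, 0, 0, 1, 0, 0, 0, 1, 0, 1, 1, 0, 0, 1, 0,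 0, 1, 1, 0, 1, 1, 0, 1, 1, 0, 1, 0, 1, 0, 0, 0, 0, 0, 1, 0, 3, 2, 2, 3], [0, 0, 0, 0, 0, 1, 0, 0, 0, 1, 1, 1, 1, 1, 1, 1, 0, 1, 1, 1, 1, 0, 0, 0, 0, 0, 1, 1, 1, 1, 0, 0, 0, 0, 0, 2, 1, 3, 1, 3], [0, 0, 0, 0, 0, 0, 1, 0, 0, 0, 0, 0, 0, 0, 0, 0, 1, 1, 1, 1, 1, 0, 0, 0, 0, 0, 0, 0, 0, 0, 1, 1, 1, 1, 1, 3, 3, 1, 1, 1], [0, 0, 0, 0, 0, 0, 0, 1, 0, 0, 0, 0, 0, 0, 0, 0, 0, 0, 0, 0, 2, 1, 1, 1, 1, 1, 1, 1, 1, 1, 1, 1, 1, 1, 1, 1, 1, 1, 3, 3]]"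
lemma chk_30: "chk G30 [0, 1, 4, 8] 34" by code_simp

definition G31 :: "nat list list" where "G31 = [[1, 0, 0, 0, 0, 0, 0, 0, 1, 0, 0, 1, 1, 0, 1, 0, 1, 1, 1, 0, 1, 0, 1, 0, 0, 0, 0, 1, 0, 1, 1, 0, 1, 1, 1, 1, 1, 1, 2, 1], [0, 1, 0, 0, 0, 0, 0, 0, 1, 1, 1, 0, 0, 1, 0, 1, 0, 1, 1, 0, 1, 0, 1, 0, 1, 1, 1, 0, 1, 0, 0, 1, 0, 0, 1, 1, 1, 1, 2, 3], [0, 0, 1, 0, 0, 0, 0, 0, 0, 0, 0, 1, 0, 0, 1, 1, 0, 0, 1, 0, 0, 1, 1, 0, 1, 0, 0, 1, 1, 1, 1, 1, 0, 3, 0, 0, 1, 1, 0, 0], [0, 0, 0, 1, 0, 0, 0, 0, 1, 0, 0, 0, 0, 1, 1, 0, 0, 1, 0, 1, 0, 0, 1, 1, 1, 0, 1, 1, 0, 1, 1, 0, 0, 1, 0, 0, 1, 2, 2, 1], [0, 0, 0, 0, 1, 0, 0, 0, 0, 1, 1, 0, 1, 0, 1, 0, 1, 1, 1, 1, 0, 1, 0, 1, 1, 1, 0, 1, 0, 1, 0, 1, 0, 0, 1, 1, 3, 2, 1, 0], [0, 0, 0, 0, 0, 1, 0, 0, 0, 1, 0, 1, 0, 1, 1, 0, 1, 0, 0, 0, 1, 1, 0, 1, 1, 1, 0, 1, 0, 0, 1, 0, 1, 2, 3, 0, 0, 0, 1, 2], [0, 0, 0, 0, 0, 0, 1, 0,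 0, 0, 1, 0, 1, 0, 0, 1, 0, 0, 0, 0, 1, 1, 0, 1, 1, 1, 0, 1, 0, 2, 0, 1, 0, 3, 0, 1, 3, 1, 2, 3], [0, 0, 0, 0, 0, 0, 0, 1, 0, 0, 0, 0, 0, 0, 0, 0, 0, 1, 1, 1, 1, 1, 1, 1, 1, 1, 1, 1, 1, 1, 1, 1, 1, 3, 3, 1, 3, 3, 3, 1]]"
lemma chk_31: "chk G31 [0, 1, 3, 8] 35" by code_simp

definition G32 :: "nat list list" where "G32 = [[1, 0, 0, 0, 0, 0, 0, 0, 1, 1, 1, 1, 1, 0, 0, 1, 1, 1, 1, 0, 0, 1, 0, 0, 0, 1, 1, 1, 0, 0, 0, 1, 1, 0, 0, 1, 1, 2, 1, 1], [0, 1, 0, 0, 0, 0, 0, 0, 1, 0, 0, 1, 0, 0, 0, 1, 0, 1, 1, 1, 1, 1, 0, 1, 0, 0, 1, 0, 1, 0, 0, 0, 1, 0, 1, 1, 0, 0, 0, 3], [0, 0, 1, 0, 0, 0, 0, 0, 0, 1, 1, 1, 0, 1, 0, 0, 0, 1, 0, 0, 0, 1, 0, 0, 1, 0, 1, 1, 1, 0, 1, 0, 1, 0, 1, 1, 1, 2, 2, 0], [0, 0, 0, 1, 0, 0, 0, 0, 1, 0, 0, 1, 1, 1, 0, 0, 1, 1, 1, 0, 0, 1, 0, 1, 1, 1, 1, 1, 1, 1, 0, 0, 0, 1, 1, 1, 0, 0, 3, 2], [0, 0, 0, 0, 1, 0, 0, 0, 0, 1, 0, 1, 1, 1, 1, 1,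 0, 0, 0, 1, 0, 1, 1, 0, 0, 0, 0, 0, 0, 0, 1, 1, 0, 1, 0, 0, 3, 1, 1, 0], [0, 0, 0, 0, 0, 1, 0, 0, 0, 0, 0, 1, 1, 1, 1, 1, 0, 0, 1, 0, 1, 1, 1, 0, 0, 0, 0, 1, 1, 1, 0, 0, 0, 1, 0, 1, 2, 2, 0, 3], [0, 0, 0, 0, 0, 0, 1, 0, 0, 0, 1, 1, 1, 1, 1, 1, 1, 1, 1, 1, 1, 0, 0, 0, 0, 0, 0, 0, 0, 2, 0, 0, 1, 1, 3, 1, 3, 1, 3, 3], [0, 0, 0, 0, 0, 0, 0, 1, 0, 0, 0, 0, 0, 0, 0, 0, 0, 0, 0, 0, 2, 1, 1, 1, 1, 1, 1, 1, 1, 1, 1, 3, 1, 1, 1, 1, 3, 3, 1, 1]]"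
lemma chk_32: "chk G32 [0, 1, 3, 8] 36" by code_simp

definition G33 :: "nat list list" where "G33 = [[1, 0, 0, 0, 0, 0, 0, 0, 1, 1, 0, 1, 0, 1, 1, 0, 1, 0, 1, 0, 0, 1, 0, 1, 0, 1, 0, 0, 1, 0, 0, 1, 1, 0, 0, 1, 1, 0, 0, 0], [0, 1, 0, 0, 0, 0, 0, 0, 1, 1, 0, 1, 0, 1, 0, 1, 0, 0, 0, 1, 1, 0, 1, 0, 0, 1, 0, 1, 0, 1, 1, 0, 1, 0, 1, 0, 2, 1, 0, 2], [0, 0, 1, 0, 0, 0, 0, 0, 0, 1, 1, 0, 1, 1, 1, 1, 0, 1, 1, 1, 0, 0, 0, 1, 0, 0, 1, 1, 1, 1, 0, 1, 0, 0, 1, 1, 0, 3, 2, 1], [0, 0, 0, 1, 0, 0, 0, 0, 1, 0, 1, 0, 1, 1, 0, 0, 1, 0, 1, 1, 0, 1, 1, 0, 1, 1, 0, 1, 1, 1, 0, 1, 1, 1, 0, 0, 3, 0, 2, 3], [0, 0, 0, 0, 1, 0, 0, 0, 0, 0, 1, 0, 0, 0, 0, 0, 0, 1, 1, 1, 1, 0, 0, 0, 1, 1, 1, 3, 0, 0, 0, 0, 0, 0, 1, 1, 1, 1, 1, 1], [0, 0, 0, 0, 0, 1, 0, 0, 0, 0, 0, 1, 0, 0, 0, 0, 1, 1, 0, 1, 1, 0, 1, 1, 1, 0, 0, 1, 0, 1, 1, 1, 0, 2, 2, 0, 0, 1, 3, 3], [0, 0, 0, 0, 0, 0, 1, 0,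 0, 0, 0, 0, 1, 1, 1, 1, 0, 0, 1, 0, 0, 0, 1, 1, 1, 0, 0, 1, 1, 0, 0, 0, 1, 3, 1, 1, 1, 0, 2, 2], [0, 0, 0, 0, 0, 0, 0, 1, 0, 0, 0, 0, 0, 0, 0, 0, 0, 0, 0, 0, 2, 1, 1, 1, 1, 1, 1, 1, 1, 1, 1, 1, 1, 3, 3, 1, 1, 1, 1, 1]]"
lemma chk_33: "chk G33 [0, 1, 2, 9] 37" by code_simp

definition G34 :: "nat list list" where "G34 = [[1, 0, 0, 0, 0, 0, 0, 0, 0, 0, 1, 0, 0, 1, 1, 1, 1, 0, 1, 1, 0, 1, 1, 1, 1, 0, 1, 0, 1, 1, 1, 0, 0, 0, 1, 1, 0, 1, 1, 2], [0, 1, 0, 0, 0, 0, 0, 0, 1, 0, 1, 1, 0, 1, 0, 1, 0, 0, 1, 0, 1, 1, 0, 0, 1, 0, 1, 0, 0, 1, 1, 1, 1, 0, 1, 1, 1, 2, 1, 1], [0, 0, 1, 0, 0, 0, 0, 0, 1, 1, 0, 1, 0, 0, 0, 1, 0, 1, 1, 1, 0, 0, 0, 0, 1, 1, 0, 0, 1, 0, 0, 1, 0, 1, 0, 0, 1, 1, 0, 3], [0, 0, 0, 1, 0, 0, 0, 0, 0, 1, 0, 0, 1, 1, 0, 0, 1, 1, 0, 1, 1, 1, 0, 0, 0, 0, 1, 1, 1, 0, 1, 1, 0, 2, 0, 0, 0, 2, 1, 1], [0, 0, 0, 0, 1, 0, 0, 0, 1, 1, 0, 0, 1, 1, 1, 1,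 0, 0, 1, 1, 1, 1, 1, 0, 0, 0, 0, 0, 0, 1, 0, 0, 0, 2, 1, 0, 2, 0, 1, 1], [0, 0, 0, 0, 0, 1, 0, 0, 0, 0, 1, 1, 1, 1, 1, 1, 0, 0, 0, 0, 1, 0, 0, 1, 1, 1, 1, 1, 1, 1, 0, 0, 0, 2, 0, 1, 1, 1, 3, 1], [0, 0, 0, 0, 0, 0, 1, 0, 0, 0, 0, 0, 0, 0, 0, 0, 1, 1, 1, 1, 1, 0, 0, 0, 0, 0, 0, 0, 0, 0, 1, 1, 1, 1, 3, 1, 3, 1, 1, 1], [0, 0, 0, 0, 0, 0, 0, 1, 0, 0, 0, 0, 0, 0, 0, 0, 0, 0, 0, 0, 2, 1, 1, 1, 1, 1, 1, 1, 1, 1, 1, 1, 1, 1, 3, 1, 1, 1, 1, 3]]"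
lemma chk_34: "chk G34 [0, 1, 5, 10] 38" by code_simp

definition G35 :: "nat list list" where "G35 = [[1, 0, 0, 0, 0, 0, 0, 0, 0, 1, 1, 0, 1, 1, 0, 1, 0, 1, 0, 1, 0, 1, 1, 0, 0, 0, 1, 0, 1, 1, 1, 1, 0, 0, 1, 2, 1, 1, 1, 1], [0, 1, 0, 0, 0, 0, 0, 0, 1, 1, 0, 1, 0, 0, 1, 1, 0, 0, 0, 0, 0, 1, 0, 0, 1, 0, 0, 1, 1, 0, 1, 1, 0, 0, 1, 0, 0, 1, 1, 3], [0, 0, 1, 0, 0, 0, 0, 0, 1, 0, 1, 1, 1, 1, 0, 1, 0, 1, 1, 0, 1, 0, 1, 1, 0, 1, 0, 1, 0, 0, 1, 1, 1, 0, 0, 1, 0, 1, 3, 2], [0, 0, 0, 1, 0, 0, 0, 0, 1, 1, 1, 0, 0, 0, 1, 1, 1, 1, 0, 0, 0, 0, 0, 1, 1, 1, 1, 1, 1, 0, 0, 0, 0, 1, 1, 1, 3, 1, 1, 2], [0, 0, 0, 0, 1, 0, 0, 0, 0, 0, 0, 0, 0, 1, 1, 0, 0, 1, 1, 1, 0, 1, 1, 1, 0, 0, 0, 0, 1, 1, 0, 1, 1, 1, 2, 0, 2, 0, 1, 3], [0, 0, 0, 0, 0, 1, 0, 0, 0, 0, 0, 1, 0, 1, 1, 0, 1, 0, 0, 0, 1, 1, 1, 1, 0, 0, 0, 1, 0, 0, 0, 1, 1, 1, 2, 1, 3, 3, 0, 2], [0, 0, 0, 0, 0, 0, 1, 0,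 0, 0, 0, 0, 1, 1, 1, 1, 1, 1, 1, 1, 1, 0, 0, 0, 0, 0, 0, 0, 0, 2, 1, 1, 1, 1, 1, 1, 3, 1, 1, 3], [0, 0, 0, 0, 0, 0, 0, 1, 0, 0, 0, 0, 0, 0, 0, 0, 0, 0, 0, 0, 2, 1, 1, 1, 1, 1, 1, 1, 1, 1, 1, 1, 1, 1, 3, 1, 3, 3, 3, 3]]"
lemma chk_35: "chk G35 [0, 1, 3, 9] 39" by code_simp

definition G36 :: "nat list list" where "G36 = [[1, 0, 0, 0, 0, 0, 0, 0, 0, 0, 1, 0, 1, 0, 1, 1, 0, 1, 0, 1, 1, 0, 1, 1, 0, 0, 1, 1, 0, 0, 0, 1, 1, 0, 0, 1, 0, 0, 1, 0], [0, 1, 0, 0, 0, 0, 0, 0, 0, 1, 1, 1, 0, 0, 1, 0, 1, 0, 0, 1, 1, 0, 1, 0, 1, 1, 0, 1, 0, 1, 1, 0, 1, 1, 0, 2, 1, 1, 3, 1], [0, 0, 1, 0, 0, 0, 0, 0, 0, 1, 1, 0, 0, 1, 0, 1, 1, 1, 0, 1, 1, 1, 1, 0, 1, 0, 0, 1, 1, 0, 1, 1, 1, 0, 0, 1, 1, 1, 2, 0], [0, 0, 0, 1, 0, 0, 0, 0, 1, 1, 1, 0, 0, 0, 0, 0, 1, 1, 1, 1, 0, 0, 0, 0, 0, 1, 0, 0, 1, 1, 1, 0, 0, 1, 1, 0, 2, 1, 1, 2], [0, 0, 0, 0, 1, 0, 0, 0, 1, 1, 0, 1, 1, 1, 0, 0,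 1, 1, 1, 0, 1, 1, 0, 0, 1, 0, 1, 0, 1, 1, 0, 1, 0, 1, 0, 0, 2, 3, 3, 3], [0, 0, 0, 0, 0, 1, 0, 0, 1, 1, 1, 1, 1, 1, 0, 0, 0, 0, 0, 0, 0, 0, 1, 1, 1, 0, 0, 1, 1, 1, 1, 1, 0, 0, 2, 1, 1, 3, 1, 3], [0, 0, 0, 0, 0, 0, 1, 0, 0, 0, 0, 0, 0, 0, 1, 1, 1, 1, 1, 1, 1, 1, 1, 1, 1, 0, 0, 0, 0, 0, 0, 2, 1, 1, 1, 1, 1, 1, 1, 1], [0, 0, 0, 0, 0, 0, 0, 1, 0, 0, 0, 0, 0, 0, 0, 0, 0, 0, 0, 0, 0, 0, 0, 0, 0, 1, 1, 1, 1, 1, 1, 1, 1, 1, 3, 3, 3, 3, 1, 3]]"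
lemma chk_36: "chk G36 [0, 1, 6, 14] 41" by code_simp

definition Gs :: "nat list list list" where "Gs = [G0, G1, G2, G3, G4, G5, G6, G7, G8, G9, G10, G11, G12, G13, G14, G15, G16, G17, G18, G19, G20, G21, G22, G23, G24, G25, G26, G27, G28, G29, G30, G31, G32, G33, G34, G35, G36]"
definition Zs :: "nat list list" where "Zs = [[0, 1, 5, 9], [0, 1, 13, 15], [0, 1, 6, 11], [0, 1, 13, 14], [0, 1, 3, 8], [0, 1, 4, 11], [0, 1, 3, 9], [0, 1, 6, 13], [0, 1, 5, 8], [0, 1, 2, 8], [0, 1, 5, 10], [0, 1, 7, 17], [0, 1, 6, 14], [0, 1, 6, 14], [0, 1, 5, 10], [0, 1, 6, 16], [0, 1, 6, 14], [0, 1, 2, 8], [0, 1, 4, 8], [0, 1, 6, 16], [0, 1, 6, 14], [0, 1, 2, 8], [0, 1, 2, 8], [0, 1, 2, 8], [0, 1, 6, 14], [0, 1, 6, 14], [0, 1, 6, 14], [0, 1, 2, 8], [0, 1, 3, 8], [0, 1, 3, 8], [0, 1, 4, 8], [0, 1, 3, 8], [0, 1, 3, 8], [0, 1, 2, 9], [0, 1, 5, 10], [0, 1, 3, 9], [0, 1, 6, 14]]"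
definition Vs :: "nat list" where "Vs = [0, 5, 6, 7, 8, 9, 10, 11, 12, 13, 14, 15, 16, 17, 18, 19, 20, 21, 22, 23, 24, 25, 26, 27, 28, 29, 30, 31, 32, 33, 34, 35, 36, 37, 38, 39, 41]"

lemma all_chk: "\<forall>j<37. chk (Gs!j) (Zs!j) (Vs!j)"
proof -
  have lens: "length Gs = 37" "length Zs = 37" "length Vs = 37" by (simp_all add: Gs_def Zs_def Vs_def)
  have "list_all (\<lambda>(G,Z,v). chk G Z v) (zip Gs (zip Zs Vs))"
    by (simp only: Gs_def Zs_def Vs_def zip_Cons_Cons zip_Nil list.pred_inject prod.case simp_thms chk_0 chk_1 chk_2 chk_3 chk_4 chk_5 chk_6 chk_7 chk_8 chk_9 chk_10 chk_11 chk_12 chk_13 chk_14 chk_15 chk_16 chk_17 chk_18 chk_19 chk_20 chk_21 chk_22 chk_23 chk_24 chk_25 chk_26 chk_27 chk_28 chk_29 chk_30 chk_31 chk_32 chk_33 chk_34 chk_35 chk_36)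
  then show ?thesis using lens by (simp add: list_all_length)
qed

lemma Vs_distinct: "distinct Vs" by (simp add: Vs_def)

theorem mainTheorem12:
  shows "\<exists>F :: nat \<Rightarrow> (40 \<Rightarrow> 4) set.
           (\<forall>k<37. extremal_type_II (F k)) \<and>
           (\<forall>j<37. \<forall>k<37. j \<noteq> k \<longrightarrow> \<not> z4_equiv (F j) (F k))"
proof (intro exI[of _ "\<lambda>j. gcode.C (gv (Gs!j)) pv 8"] conjI allI impI)
  fix k :: nat assume k: "k < 37"
  have xc: "xcode (gv (Gs!k)) pv 8" using all_chk k by (blast intro: chk_xcode)
  show "extremal_type_II (gcode.C (gv (Gs!k)) pv 8)" by (rule xcode.extremal[OF xc]) simp
next
  fix j k :: nat assume j: "j < 37" and k: "k < 37" and jk: "j \<noteq> k"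
  show "\<not> z4_equiv (gcode.C (gv (Gs!j)) pv 8) (gcode.C (gv (Gs!k)) pv 8)"
  proof
    assume e: "z4_equiv (gcode.C (gv (Gs!j)) pv 8) (gcode.C (gv (Gs!k)) pv 8)"
    have "Vs!k = Vs!j"
      using res_equiv[OF e] chk_inv all_chk j k by metis
    moreover have "length Vs = 37" by (simp add: Vs_def)
    ultimately show False using Vs_distinct j k jk by (simp add: nth_eq_iff_index_eq)
  qed
qed


end
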